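(* For a smooth real-valued potential $V(t,x)$, the maximal Lie invariance algebra $\mathfrak g_V$ of $i\psi_t+\psi_{xx}+V(t,x)\psi=0$ is spanned by the vector fields $D_{\mathbb R}(\tau)$, $G(\chi)$, $I$, $\sigma M$ and $Z(\eta^0)$, where $\tau,\chi,\sigma$ run through the smooth real-valued functions of $t$ satisfying $$\tau V_t+\Big(\frac12\tau_tx+\chi\Big)V_x+\tau_tV=\frac18\tau_{ttt}x^2+\frac12\chi_{tt}x+\sigma_t,$$ and $\eta^0$ runs through the solution set of the equation.
   Context: $\psi$ is a complex-valued function of real $t,x$; $\psi^*$ is treated as an additional dependent variable and vector fields act on $(t,x,\psi,\psi^* )$. Notation: $M=i\psi\partial_\psi-i\psi^*\partial_{\psi^*}$, $I=\psi\partial_\psi+\psi^*\partial_{\psi^*}$, $D_{\mathbb R}(\tau)=\tau\partial_t+\frac12\tau_tx\partial_x+\frac18\tau_{tt}x^2M-\frac14\tau_tI$, $G(\chi)=\chi\partial_x+\frac12\chi_txM$, $Z(\eta)=\eta\partial_\psi+\eta^*\partial_{\psi^*}$; $\sigma M$ means $\sigma(t)M$. *)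

theory Defs
  imports "HOL-Analysis.Analysis"
begin

fun Ck :: "nat \<Rightarrow> ('a::real_normed_vector \<Rightarrow> 'b::real_normed_vector) \<Rightarrow> bool" where
  "Ck 0 f = continuous_on UNIV f"
| "Ck (Suc n) f = (\<exists>f'. (\<forall>x. (f has_derivative f' x) (at x)) \<and> (\<forall>v. Ck n (\<lambda>x. f' x v)))"

definition smooth :: "('a::real_normed_vector \<Rightarrow> 'b::real_normed_vector) \<Rightarrow> bool" where
  "smooth f \<longleftrightarrow> (\<forall>n. Ck n f)"

definition pdt :: "(real \<Rightarrow> real \<Rightarrow> 'a::real_normed_vector) \<Rightarrow> real \<Rightarrow> real \<Rightarrow> 'a" where
  "pdt f t x = vector_derivative (\<lambda>s. f s x) (at t)"

definition pdx :: "(real \<Rightarrow> real \<Rightarrow> 'a::real_normed_vector) \<Rightarrow> real \<Rightarrow> real \<Rightarrow> 'a" where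
  "pdx f t x = vector_derivative (\<lambda>y. f t y) (at x)"

(* Vector fields  tau d_t + xi d_x + eta d_psi + eta^* d_psi^*  on (t,x,psi,psi^* ),
   the point (t,x,psi,psi^* ) being encoded as (t,x,psi) with psi complex.
   Represented by the triple (tau, xi, eta); the coefficient of d_psi^* is conj eta. *)
type_synonym vf = "(real \<times> real \<times> complex \<Rightarrow> real) \<times> (real \<times> real \<times> complex \<Rightarrow> real) \<times> (real \<times> real \<times> complex \<Rightarrow> complex)"

definition vf_add :: "vf \<Rightarrow> vf \<Rightarrow> vf" where
  "vf_add P Q = (case P of (t1, x1, e1) \<Rightarrow> case Q of (t2, x2, e2) \<Rightarrow>
      (\<lambda>p. t1 p + t2 p, \<lambda>p. x1 p + x2 p, \<lambda>p. e1 p + e2 p))"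

definition vf_scale :: "real \<Rightarrow> vf \<Rightarrow> vf" where
  "vf_scale c Q = (case Q of (t1, x1, e1) \<Rightarrow>
      (\<lambda>p. c * t1 p, \<lambda>p. c * x1 p, \<lambda>p. of_real c * e1 p))"

definition vfI :: vf where
  "vfI = (\<lambda>_. 0, \<lambda>_. 0, \<lambda>(t, x, \<psi>). \<psi>)"

(* sigma(t) M,  M = i psi d_psi - i psi^* d_psi^* *)
definition vfM :: "(real \<Rightarrow> real) \<Rightarrow> vf" where
  "vfM \<sigma> = (\<lambda>_. 0, \<lambda>_. 0, \<lambda>(t, x, \<psi>). of_real (\<sigma> t) * \<i> * \<psi>)"

(* D_R(tau) = tau d_t + 1/2 tau_t x d_x + 1/8 tau_tt x^2 M - 1/4 tau_t I *)
definition vfD :: "(real \<Rightarrow> real) \<Rightarrow> vf" where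
  "vfD \<tau> = (\<lambda>(t, x, \<psi>). \<tau> t,
            \<lambda>(t, x, \<psi>). 1/2 * deriv \<tau> t * x,
            \<lambda>(t, x, \<psi>). of_real (1/8 * (deriv ^^ 2) \<tau> t * x\<^sup>2) * \<i> * \<psi>
                        - of_real (1/4 * deriv \<tau> t) * \<psi>)"

(* G(chi) = chi d_x + 1/2 chi_t x M *)
definition vfG :: "(real \<Rightarrow> real) \<Rightarrow> vf" where
  "vfG chi = (\<lambda>_. 0,
            \<lambda>(t, x, \<psi>). chi t,
            \<lambda>(t, x, \<psi>). of_real (1/2 * deriv chi t * x) * \<i> * \<psi>)"

definition vfZ :: "(real \<Rightarrow> real \<Rightarrow> complex) \<Rightarrow> vf" where
  "vfZ \<eta> = (\<lambda>_. 0, \<lambda>_. 0, \<lambda>(t, x, \<psi>). \<eta> t x)"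

definition schr :: "(real \<Rightarrow> real \<Rightarrow> real) \<Rightarrow> (real \<Rightarrow> real \<Rightarrow> complex) \<Rightarrow> real \<Rightarrow> real \<Rightarrow> complex" where
  "schr V \<psi> t x = \<i> * pdt \<psi> t x + pdx (pdx \<psi>) t x + of_real (V t x) * \<psi> t x"

definition is_solution :: "(real \<Rightarrow> real \<Rightarrow> real) \<Rightarrow> (real \<Rightarrow> real \<Rightarrow> complex) \<Rightarrow> bool" where
  "is_solution V \<psi> \<longleftrightarrow> smooth (\<lambda>(t, x). \<psi> t x) \<and> (\<forall>t x. schr V \<psi> t x = 0)"

(* Second prolongation pr^(2) Q applied to  i psi_t + psi_xx + V psi, evaluated on the
   2-jet of a function psi at (t,x):  eta^J = D_J(eta - tau psi_t - xi psi_x) + tau psi_Jt + xi psi_Jx,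
   total derivatives being evaluated along psi. *)
definition prolong_schr :: "(real \<Rightarrow> real \<Rightarrow> real) \<Rightarrow> vf \<Rightarrow> (real \<Rightarrow> real \<Rightarrow> complex) \<Rightarrow> real \<Rightarrow> real \<Rightarrow> complex" where
  "prolong_schr V Q \<psi> t x = (case Q of (\<tau>, \<xi>, \<eta>) \<Rightarrow>
     let T = (\<lambda>t x. \<tau> (t, x, \<psi> t x));
         X = (\<lambda>t x. \<xi> (t, x, \<psi> t x));
         H = (\<lambda>t x. \<eta> (t, x, \<psi> t x));
         Qc = (\<lambda>t x. H t x - of_real (T t x) * pdt \<psi> t x - of_real (X t x) * pdx \<psi> t x);
         eta_t = pdt Qc t x + of_real (T t x) * pdt (pdt \<psi>) t x + of_real (X t x) * pdx (pdt \<psi>) t x;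
         eta_xx = pdx (pdx Qc) t x + of_real (T t x) * pdt (pdx (pdx \<psi>)) t x
                    + of_real (X t x) * pdx (pdx (pdx \<psi>)) t x
     in \<i> * eta_t + eta_xx + of_real (T t x * pdt V t x + X t x * pdx V t x) * \<psi> t x
        + of_real (V t x) * H t x)"

definition is_lie_symmetry :: "(real \<Rightarrow> real \<Rightarrow> real) \<Rightarrow> vf \<Rightarrow> bool" where
  "is_lie_symmetry V Q \<longleftrightarrow> (case Q of (\<tau>, \<xi>, \<eta>) \<Rightarrow> smooth \<tau> \<and> smooth \<xi> \<and> smooth \<eta>) \<and>
     (\<forall>\<psi>. smooth (\<lambda>(t, x). \<psi> t x) \<longrightarrow>
        (\<forall>t x. schr V \<psi> t x = 0 \<longrightarrow> prolong_schr V Q \<psi> t x = 0))"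

definition lie_algebra :: "(real \<Rightarrow> real \<Rightarrow> real) \<Rightarrow> vf set" where
  "lie_algebra V = {Q. is_lie_symmetry V Q}"

definition det_eq :: "(real \<Rightarrow> real \<Rightarrow> real) \<Rightarrow> (real \<Rightarrow> real) \<Rightarrow> (real \<Rightarrow> real) \<Rightarrow> (real \<Rightarrow> real) \<Rightarrow> bool" where
  "det_eq V \<tau> chi \<sigma> \<longleftrightarrow> (\<forall>t x.
     \<tau> t * pdt V t x + (1/2 * deriv \<tau> t * x + chi t) * pdx V t x + deriv \<tau> t * V t x
       = 1/8 * (deriv ^^ 3) \<tau> t * x\<^sup>2 + 1/2 * (deriv ^^ 2) chi t * x + deriv \<sigma> t)"

end

theory Submission
  imports Defs
begin

definition dd :: "('a::real_normed_vector \<Rightarrow> 'b::real_normed_vector) \<Rightarrow> 'a \<Rightarrow> 'a \<Rightarrow> 'b" where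
  "dd f v x = frechet_derivative f (at x) v"

lemma dd_eq: "(f has_derivative F) (at x) \<Longrightarrow> dd f v x = F v"
  using frechet_derivative_at[of f F x] by (simp add: dd_def)

lemma CkI: "(\<And>x. (f has_derivative F x) (at x)) \<Longrightarrow> (\<And>v. Ck n (\<lambda>x. F x v)) \<Longrightarrow> Ck (Suc n) f"
  by (simp only: Ck.simps) (rule exI[of _ F], auto)

lemma Ck_Suc_dd: "Ck (Suc n) f \<longleftrightarrow> (\<forall>x. (f has_derivative (\<lambda>v. dd f v x)) (at x)) \<and> (\<forall>v. Ck n (dd f v))"
proof
  assume "Ck (Suc n) f"
  then obtain f' where f': "\<And>x. (f has_derivative f' x) (at x)" "\<And>v. Ck n (\<lambda>x. f' x v)" by auto
  have e: "\<And>x v. dd f v x = f' x v" using f'(1) by (rule dd_eq)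
  have e2: "(\<lambda>v. dd f v x) = f' x" for x by (rule ext) (simp add: e)
  have "dd f v = (\<lambda>x. f' x v)" for v by (rule ext) (simp add: e)
  then show "(\<forall>x. (f has_derivative (\<lambda>v. dd f v x)) (at x)) \<and> (\<forall>v. Ck n (dd f v))"
    using f' e2 by simp
next
  assume "(\<forall>x. (f has_derivative (\<lambda>v. dd f v x)) (at x)) \<and> (\<forall>v. Ck n (dd f v))"
  then show "Ck (Suc n) f" by (simp only: Ck.simps) (rule exI[of _ "\<lambda>x v. dd f v x"], auto)
qed

lemma CkD1: "Ck (Suc n) f \<Longrightarrow> (f has_derivative (\<lambda>v. dd f v x)) (at x)"
  using Ck_Suc_dd[THEN iffD1] by blast

lemma CkD2: "Ck (Suc n) f \<Longrightarrow> Ck n (dd f v)"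
  using Ck_Suc_dd[THEN iffD1] by blast

lemma Ck_mono: "Ck (Suc n) f \<Longrightarrow> Ck n f"
proof (induction n arbitrary: f)
  case 0
  from 0 obtain f' where "\<And>x. (f has_derivative f' x) (at x)" by auto
  then have "\<forall>x. continuous (at x) f" using has_derivative_continuous by blast
  then show ?case by (simp add: continuous_at_imp_continuous_on)
next
  case (Suc n)
  define f' where "f' = (\<lambda>x v. dd f v x)"
  have f': "\<And>x. (f has_derivative f' x) (at x)" "\<And>v. Ck (Suc n) (\<lambda>x. f' x v)"
    using CkD1[OF Suc.prems] CkD2[OF Suc.prems] by (simp_all add: f'_def)
  have "\<And>v. Ck n (\<lambda>x. f' x v)" using Suc.IH f'(2) by blast
  with f'(1) show ?case by (rule CkI)
qed

lemma Ck_add_le: "Ck (k + m) f \<Longrightarrow> Ck m f"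
proof (induction k)
  case 0 then show ?case by simp
next
  case (Suc k)
  have "Ck (Suc (k + m)) f" using Suc.prems by simp
  then have "Ck (k + m) f" by (rule Ck_mono)
  then show ?case by (rule Suc.IH)
qed

lemma Ck_le: "m \<le> n \<Longrightarrow> Ck n f \<Longrightarrow> Ck m f"
  using Ck_add_le[of "n - m" m f] by simp

lemma Ck_const: "Ck n (\<lambda>x. c)"
proof (induction n arbitrary: c)
  case 0 then show ?case by simp
next
  case (Suc n) show ?case by (rule CkI[where F="\<lambda>x v. 0"]) (auto intro: Suc)
qed

lemma Ck_linear: "bounded_linear L \<Longrightarrow> Ck n f \<Longrightarrow> Ck n (\<lambda>x. L (f x))"
proof (induction n arbitrary: f)
  case 0 then show ?case by (simp add: bounded_linear.continuous_on)
next
  case (Suc n)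
  define f' where "f' = (\<lambda>x v. dd f v x)"
  have f': "\<And>x. (f has_derivative f' x) (at x)" "\<And>v. Ck n (\<lambda>x. f' x v)"
    using CkD1[OF Suc.prems(2)] CkD2[OF Suc.prems(2)] by (simp_all add: f'_def)
  have "\<And>x. ((\<lambda>x. L (f x)) has_derivative (\<lambda>v. L (f' x v))) (at x)"
    using bounded_linear.has_derivative[OF Suc.prems(1) f'(1)] .
  moreover have "\<And>v. Ck n (\<lambda>x. L (f' x v))" using Suc.IH[OF Suc.prems(1) f'(2)] .
  ultimately show ?case by (rule CkI)
qed

lemma Ck_id: "Ck n (\<lambda>x. x)"
proof (induction n)
  case 0 then show ?case by simp
next
  case (Suc n)
  have "\<And>x. ((\<lambda>x. x) has_derivative (\<lambda>v. v)) (at x)" by (rule has_derivative_ident)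
  moreover have "\<And>v. Ck n (\<lambda>x. v)" by (rule Ck_const)
  ultimately show ?case by (rule CkI)
qed

lemma Ck_add: "Ck n f \<Longrightarrow> Ck n g \<Longrightarrow> Ck n (\<lambda>x. f x + g x)"
proof (induction n arbitrary: f g)
  case 0 then show ?case by (auto intro!: continuous_intros)
next
  case (Suc n)
  define f' where "f' = (\<lambda>x v. dd f v x)"
  define g' where "g' = (\<lambda>x v. dd g v x)"
  have f': "\<And>x. (f has_derivative f' x) (at x)" "\<And>v. Ck n (\<lambda>x. f' x v)"
    using CkD1[OF Suc.prems(1)] CkD2[OF Suc.prems(1)] by (simp_all add: f'_def)
  have g': "\<And>x. (g has_derivative g' x) (at x)" "\<And>v. Ck n (\<lambda>x. g' x v)"
    using CkD1[OF Suc.prems(2)] CkD2[OF Suc.prems(2)] by (simp_all add: g'_def)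
  have "\<And>x. ((\<lambda>x. f x + g x) has_derivative (\<lambda>v. f' x v + g' x v)) (at x)"
    using has_derivative_add[OF f'(1) g'(1)] .
  moreover have "\<And>v. Ck n (\<lambda>x. f' x v + g' x v)" using Suc.IH[OF f'(2) g'(2)] .
  ultimately show ?case by (rule CkI)
qed

lemma Ck_bilinear:
  assumes P: "bounded_bilinear P"
  shows "Ck n f \<Longrightarrow> Ck n g \<Longrightarrow> Ck n (\<lambda>x. P (f x) (g x))"
proof (induction n arbitrary: f g)
  case 0 then show ?case
    using bounded_bilinear.continuous_on[OF P] by auto
next
  case (Suc n)
  define f' where "f' = (\<lambda>x v. dd f v x)"
  define g' where "g' = (\<lambda>x v. dd g v x)"
  have f': "\<And>x. (f has_derivative f' x) (at x)" "\<And>v. Ck n (\<lambda>x. f' x v)"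
    using CkD1[OF Suc.prems(1)] CkD2[OF Suc.prems(1)] by (simp_all add: f'_def)
  have g': "\<And>x. (g has_derivative g' x) (at x)" "\<And>v. Ck n (\<lambda>x. g' x v)"
    using CkD1[OF Suc.prems(2)] CkD2[OF Suc.prems(2)] by (simp_all add: g'_def)
  have fn: "Ck n f" "Ck n g" using Suc.prems Ck_mono by auto
  have "\<And>x. ((\<lambda>x. P (f x) (g x)) has_derivative (\<lambda>v. P (f x) (g' x v) + P (f' x v) (g x))) (at x)"
    using bounded_bilinear.FDERIV[OF P f'(1) g'(1)] .
  moreover have "\<And>v. Ck n (\<lambda>x. P (f x) (g' x v) + P (f' x v) (g x))"
    by (rule Ck_add) (use Suc.IH fn f'(2) g'(2) in auto)
  ultimately show ?case by (rule CkI)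
qed

lemma linear_eucl:
  assumes "linear L"
  shows "L w = (\<Sum>b\<in>Basis. (w \<bullet> b) *\<^sub>R L (b::'a::euclidean_space))"
proof -
  have "L w = L (\<Sum>b\<in>Basis. (w \<bullet> b) *\<^sub>R b)" by (simp add: euclidean_representation)
  also have "\<dots> = (\<Sum>b\<in>Basis. (w \<bullet> b) *\<^sub>R L b)"
    by (simp add: linear_sum[OF assms] linear_scale[OF assms])
  finally show ?thesis .
qed

lemma Ck_sum: "finite S \<Longrightarrow> (\<And>i. i \<in> S \<Longrightarrow> Ck n (f i)) \<Longrightarrow> Ck n (\<lambda>x. \<Sum>i\<in>S. f i x)"
proof (induction S rule: finite_induct)
  case empty then show ?case by (simp add: Ck_const)
next
  case (insert a S)
  then show ?case by (simp add: Ck_add)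
qed

lemma Ck_compose:
  fixes g :: "'a::real_normed_vector \<Rightarrow> 'b::euclidean_space" and f :: "'b \<Rightarrow> 'c::real_normed_vector"
  shows "Ck n f \<Longrightarrow> Ck n g \<Longrightarrow> Ck n (\<lambda>x. f (g x))"
proof (induction n arbitrary: f g)
  case 0 then show ?case
    by (simp add: continuous_on_compose2[of UNIV f UNIV g])
next
  case (Suc n)
  have fd: "\<And>y. (f has_derivative (\<lambda>v. dd f v y)) (at y)" using CkD1[OF Suc.prems(1)] .
  have gd: "\<And>x. (g has_derivative (\<lambda>v. dd g v x)) (at x)" using CkD1[OF Suc.prems(2)] .
  define F where "F = (\<lambda>x v. \<Sum>b\<in>Basis. (dd g v x \<bullet> b) *\<^sub>R dd f b (g x))"
  have "((\<lambda>x. f (g x)) has_derivative F x) (at x)" for x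
  proof -
    have "((\<lambda>x. f (g x)) has_derivative (\<lambda>v. dd f (dd g v x) (g x))) (at x)"
      using has_derivative_compose[OF gd fd] .
    moreover have "(\<lambda>v. dd f (dd g v x) (g x)) = F x"
      unfolding F_def
      by (rule ext, rule linear_eucl, rule has_derivative_linear[OF fd])
    ultimately show ?thesis by simp
  qed
  moreover have "Ck n (\<lambda>x. F x v)" for v
    unfolding F_def
  proof (rule Ck_sum)
    fix b :: 'b assume "b \<in> Basis"
    have 1: "Ck n (\<lambda>x. dd g v x \<bullet> b)"
      using Ck_linear[OF bounded_linear_inner_left CkD2[OF Suc.prems(2)]] .
    have 2: "Ck n (\<lambda>x. dd f b (g x))"
      using Suc.IH[OF CkD2[OF Suc.prems(1)] Ck_mono[OF Suc.prems(2)]] .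
    show "Ck n (\<lambda>x. (dd g v x \<bullet> b) *\<^sub>R dd f b (g x))"
      using Ck_bilinear[OF bounded_bilinear_scaleR 1 2] .
  qed simp
  ultimately show ?case by (rule CkI)
qed

lemma smooth_Ck: "smooth f \<Longrightarrow> Ck n f" by (simp add: smooth_def)

lemma smoothI: "(\<And>n. Ck n f) \<Longrightarrow> smooth f" by (simp add: smooth_def)

lemma smooth_hasderiv: "smooth f \<Longrightarrow> (f has_derivative (\<lambda>v. dd f v x)) (at x)"
  using CkD1[OF smooth_Ck[of f "Suc 0"]] by simp

lemma smooth_hasderiv_within: "smooth f \<Longrightarrow> (f has_derivative (\<lambda>v. dd f v x)) (at x within S)"
  using smooth_hasderiv has_derivative_at_withinI by blast

lemma smooth_dd: "smooth f \<Longrightarrow> smooth (dd f v)"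
  by (rule smoothI) (rule CkD2[OF smooth_Ck])

lemma smooth_dd': "smooth f \<Longrightarrow> smooth (\<lambda>x. dd f v x)"
  using smooth_dd[of f v] by simp

lemma smooth_const[simp]: "smooth (\<lambda>x. c)" by (rule smoothI, rule Ck_const)
lemma smooth_id[simp]: "smooth (\<lambda>x. x)" by (rule smoothI, rule Ck_id)

lemma smooth_linear: "bounded_linear L \<Longrightarrow> smooth f \<Longrightarrow> smooth (\<lambda>x. L (f x))"
  by (rule smoothI, rule Ck_linear, auto simp: smooth_def)

lemma smooth_add: "smooth f \<Longrightarrow> smooth g \<Longrightarrow> smooth (\<lambda>x. f x + g x)"
  by (rule smoothI, rule Ck_add, auto simp: smooth_def)

lemma smooth_bilinear: "bounded_bilinear P \<Longrightarrow> smooth f \<Longrightarrow> smooth g \<Longrightarrow> smooth (\<lambda>x. P (f x) (g x))"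
  by (rule smoothI, rule Ck_bilinear, auto simp: smooth_def)

lemma smooth_compose:
  fixes g :: "'a::real_normed_vector \<Rightarrow> 'b::euclidean_space" and f :: "'b \<Rightarrow> 'c::real_normed_vector"
  shows "smooth f \<Longrightarrow> smooth g \<Longrightarrow> smooth (\<lambda>x. f (g x))"
  by (rule smoothI, rule Ck_compose, auto simp: smooth_def)

lemma smooth_sum: "finite S \<Longrightarrow> (\<And>i. i \<in> S \<Longrightarrow> smooth (f i)) \<Longrightarrow> smooth (\<lambda>x. \<Sum>i\<in>S. f i x)"
  by (rule smoothI, rule Ck_sum, auto simp: smooth_def)

lemma smooth_mult: "smooth f \<Longrightarrow> smooth g \<Longrightarrow> smooth (\<lambda>x. f x * (g x :: 'a::real_normed_algebra))"
  using smooth_bilinear[OF bounded_bilinear_mult] .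

lemma smooth_scaleR: "smooth f \<Longrightarrow> smooth g \<Longrightarrow> smooth (\<lambda>x. f x *\<^sub>R g x)"
  using smooth_bilinear[OF bounded_bilinear_scaleR] .

lemma smooth_of_real: "smooth f \<Longrightarrow> smooth (\<lambda>x. (of_real (f x) :: 'a::real_normed_algebra_1))"
  using smooth_linear[OF bounded_linear_of_real] .

lemma smooth_Re: "smooth f \<Longrightarrow> smooth (\<lambda>x. Re (f x))"
  using smooth_linear[OF bounded_linear_Re] .
lemma smooth_Im: "smooth f \<Longrightarrow> smooth (\<lambda>x. Im (f x))"
  using smooth_linear[OF bounded_linear_Im] .
lemma smooth_fst: "smooth f \<Longrightarrow> smooth (\<lambda>x. fst (f x))"
  using smooth_linear[OF bounded_linear_fst] .
lemma smooth_snd: "smooth f \<Longrightarrow> smooth (\<lambda>x. snd (f x))"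
  using smooth_linear[OF bounded_linear_snd] .

lemma smooth_scale_const: "smooth f \<Longrightarrow> smooth (\<lambda>x. c * (f x :: 'a::real_normed_algebra))"
  using smooth_mult[OF smooth_const] .

lemma smooth_minus: "smooth f \<Longrightarrow> smooth (\<lambda>x. - f x)"
  using smooth_linear[OF bounded_linear_minus[OF bounded_linear_ident]] .

lemma smooth_diff: "smooth f \<Longrightarrow> smooth g \<Longrightarrow> smooth (\<lambda>x. f x - g x)"
  using smooth_add[OF _ smooth_minus, of f g] by simp

lemma smooth_Pair: "smooth f \<Longrightarrow> smooth g \<Longrightarrow> smooth (\<lambda>x. (f x, g x))"
proof -
  assume f: "smooth f" and g: "smooth g"
  have 1: "smooth (\<lambda>x. (f x, 0::'c))"
    using smooth_linear[OF bounded_linear_Pair[OF bounded_linear_ident bounded_linear_zero] f] .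
  have 2: "smooth (\<lambda>x. (0::'b, g x))"
    using smooth_linear[OF bounded_linear_Pair[OF bounded_linear_zero bounded_linear_ident] g] .
  show ?thesis using smooth_add[OF 1 2] by simp
qed

lemmas smooth_intros = smooth_const smooth_id smooth_add smooth_mult smooth_scaleR smooth_of_real
  smooth_Re smooth_Im smooth_fst smooth_snd smooth_minus smooth_diff smooth_Pair smooth_dd'

lemma smooth_chain:
  assumes "smooth f" "(g has_derivative g') (at x within S)"
  shows "((\<lambda>x. f (g x)) has_derivative (\<lambda>v. dd f (g' v) (g x))) (at x within S)"
  using has_derivative_compose[OF assms(2) smooth_hasderiv[OF assms(1)]] .

lemma dd_linear: "smooth f \<Longrightarrow> linear (\<lambda>v. dd f v x)"
  using has_derivative_linear[OF smooth_hasderiv] .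

lemma dd_add: "smooth f \<Longrightarrow> dd f (u + v) x = dd f u x + dd f v x"
  using linear_add[OF dd_linear] by blast
lemma dd_scaleR: "smooth f \<Longrightarrow> dd f (c *\<^sub>R v) x = c *\<^sub>R dd f v x"
  using linear_scale[OF dd_linear] by blast
lemma dd_zero: "smooth f \<Longrightarrow> dd f 0 x = 0"
  using linear_0[OF dd_linear] by blast
lemma dd_diff: "smooth f \<Longrightarrow> dd f (u - v) x = dd f u x - dd f v x"
  using linear_diff[OF dd_linear] by blast
lemma dd_uminus: "smooth f \<Longrightarrow> dd f (- u) x = - dd f u x"
  using linear_neg[OF dd_linear] by blast

subsection \<open>Functions of two variables\<close>

definition smooth2 :: "(real \<Rightarrow> real \<Rightarrow> 'a::real_normed_vector) \<Rightarrow> bool" where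
  "smooth2 \<psi> \<longleftrightarrow> smooth (\<lambda>p. \<psi> (fst p) (snd p))"

lemma smooth2_iff: "smooth (\<lambda>(t, x). \<psi> t x) \<longleftrightarrow> smooth2 \<psi>"
  by (simp add: smooth2_def case_prod_beta')

lemma pdt_eq:
  assumes "((\<lambda>p. g (fst p) (snd p)) has_derivative D) (at (t, x))"
  shows "pdt g t x = D (1, 0)"
proof -
  have l: "linear D" using has_derivative_linear[OF assms] .
  have "((\<lambda>s. (s, x)) has_derivative (\<lambda>h. (h, 0))) (at t)"
    by (auto intro!: derivative_eq_intros)
  from has_derivative_compose[OF this assms]
  have "((\<lambda>s. g s x) has_derivative (\<lambda>h. D (h, 0))) (at t)" by simp
  moreover have "(\<lambda>h. D (h, 0)) = (\<lambda>h. h *\<^sub>R D (1, 0))"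
  proof
    fix h :: real
    have "(h, 0::real) = h *\<^sub>R (1, 0)" by simp
    then show "D (h, 0) = h *\<^sub>R D (1, 0)" using linear_scale[OF l] by metis
  qed
  ultimately have "((\<lambda>s. g s x) has_vector_derivative D (1, 0)) (at t)"
    by (simp add: has_vector_derivative_def)
  then show ?thesis by (simp add: pdt_def vector_derivative_at)
qed

lemma pdx_eq:
  assumes "((\<lambda>p. g (fst p) (snd p)) has_derivative D) (at (t, x))"
  shows "pdx g t x = D (0, 1)"
proof -
  have l: "linear D" using has_derivative_linear[OF assms] .
  have "((\<lambda>y. (t, y)) has_derivative (\<lambda>h. (0, h))) (at x)"
    by (auto intro!: derivative_eq_intros)
  from has_derivative_compose[OF this assms]
  have "((\<lambda>y. g t y) has_derivative (\<lambda>h. D (0, h))) (at x)" by simp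
  moreover have "(\<lambda>h. D (0, h)) = (\<lambda>h. h *\<^sub>R D (0, 1))"
  proof
    fix h :: real
    have "(0::real, h) = h *\<^sub>R (0, 1)" by simp
    then show "D (0, h) = h *\<^sub>R D (0, 1)" using linear_scale[OF l] by metis
  qed
  ultimately have "((\<lambda>y. g t y) has_vector_derivative D (0, 1)) (at x)"
    by (simp add: has_vector_derivative_def)
  then show ?thesis by (simp add: pdx_def vector_derivative_at)
qed

lemma pdt_eq2: "((\<lambda>p. g (fst p) (snd p)) has_derivative D) (at (t, x)) \<Longrightarrow> D (1, 0) = r \<Longrightarrow> pdt g t x = r"
  using pdt_eq[of g D t x] by simp
lemma pdx_eq2: "((\<lambda>p. g (fst p) (snd p)) has_derivative D) (at (t, x)) \<Longrightarrow> D (0, 1) = r \<Longrightarrow> pdx g t x = r"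
  using pdx_eq[of g D t x] by simp

lemma pdt_dd: "smooth2 \<psi> \<Longrightarrow> pdt \<psi> t x = dd (\<lambda>p. \<psi> (fst p) (snd p)) (1, 0) (t, x)"
  unfolding smooth2_def by (rule pdt_eq, rule smooth_hasderiv)
lemma pdx_dd: "smooth2 \<psi> \<Longrightarrow> pdx \<psi> t x = dd (\<lambda>p. \<psi> (fst p) (snd p)) (0, 1) (t, x)"
  unfolding smooth2_def by (rule pdx_eq, rule smooth_hasderiv)

lemma smooth2_pdt: "smooth2 \<psi> \<Longrightarrow> smooth2 (pdt \<psi>)"
proof -
  assume a: "smooth2 \<psi>"
  have "(\<lambda>p. pdt \<psi> (fst p) (snd p)) = dd (\<lambda>p. \<psi> (fst p) (snd p)) (1, 0)"
    by (rule ext) (simp add: pdt_dd[OF a])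
  then show ?thesis using smooth_dd a by (simp add: smooth2_def)
qed

lemma smooth2_pdx: "smooth2 \<psi> \<Longrightarrow> smooth2 (pdx \<psi>)"
proof -
  assume a: "smooth2 \<psi>"
  have "(\<lambda>p. pdx \<psi> (fst p) (snd p)) = dd (\<lambda>p. \<psi> (fst p) (snd p)) (0, 1)"
    by (rule ext) (simp add: pdx_dd[OF a])
  then show ?thesis using smooth_dd a by (simp add: smooth2_def)
qed

lemma dd2_decomp:
  assumes "smooth2 \<psi>"
  shows "dd (\<lambda>p. \<psi> (fst p) (snd p)) (h, k) (t, x) = h *\<^sub>R pdt \<psi> t x + k *\<^sub>R pdx \<psi> t x"
proof -
  have s: "smooth (\<lambda>p. \<psi> (fst p) (snd p))" using assms by (simp add: smooth2_def)
  have "(h, k) = h *\<^sub>R (1, 0) + k *\<^sub>R (0::real, 1::real)" by simp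
  then have "dd (\<lambda>p. \<psi> (fst p) (snd p)) (h, k) (t, x) =
     h *\<^sub>R dd (\<lambda>p. \<psi> (fst p) (snd p)) (1, 0) (t, x) + k *\<^sub>R dd (\<lambda>p. \<psi> (fst p) (snd p)) (0, 1) (t, x)"
    by (simp only: dd_add[OF s] dd_scaleR[OF s])
  then show ?thesis by (simp add: pdt_dd[OF assms] pdx_dd[OF assms])
qed

lemma smooth2_chain:
  assumes "smooth2 \<psi>" "(a has_derivative a') (at z within S)" "(b has_derivative b') (at z within S)"
  shows "((\<lambda>z. \<psi> (a z) (b z)) has_derivative
            (\<lambda>v. a' v *\<^sub>R pdt \<psi> (a z) (b z) + b' v *\<^sub>R pdx \<psi> (a z) (b z))) (at z within S)"
proof -
  have s: "smooth (\<lambda>p. \<psi> (fst p) (snd p))" using assms by (simp add: smooth2_def)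
  have "((\<lambda>z. (a z, b z)) has_derivative (\<lambda>v. (a' v, b' v))) (at z within S)"
    using assms(2,3) by (rule has_derivative_Pair)
  from smooth_chain[OF s this] show ?thesis
    by (simp add: dd2_decomp[OF assms(1)])
qed

lemma smooth2_smooth: "smooth2 \<psi> \<Longrightarrow> smooth (\<lambda>p. \<psi> (fst p) (snd p))"
  by (simp add: smooth2_def)

lemma smooth1_dd_eq: "smooth (f :: real \<Rightarrow> real) \<Longrightarrow> dd f v t = dd f 1 t * v"
proof -
  assume s: "smooth f"
  have "dd f (v *\<^sub>R 1) t = v *\<^sub>R dd f 1 t" by (rule dd_scaleR[OF s])
  then show ?thesis by simp
qed

lemma smooth1_hasfd: "smooth (f :: real \<Rightarrow> real) \<Longrightarrow> (f has_real_derivative dd f 1 t) (at t)"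
proof -
  assume s: "smooth f"
  have e: "(\<lambda>v. dd f v t) = (*) (dd f 1 t)"
    by (rule ext) (rule smooth1_dd_eq[OF s])
  show ?thesis unfolding has_field_derivative_def
    using smooth_hasderiv[OF s, of t] unfolding e .
qed

lemma smooth1_deriv_dd: "smooth (f :: real \<Rightarrow> real) \<Longrightarrow> deriv f t = dd f 1 t"
  by (rule DERIV_imp_deriv, rule smooth1_hasfd)

lemma smooth1_hasderiv: "smooth (f :: real \<Rightarrow> real) \<Longrightarrow> (f has_derivative (\<lambda>v. v * deriv f t)) (at t)"
proof -
  assume s: "smooth f"
  have "(f has_derivative (*) (deriv f t)) (at t)"
    using smooth1_hasfd[OF s, of t] unfolding has_field_derivative_def smooth1_deriv_dd[OF s] .
  moreover have "(*) (deriv f t) = (\<lambda>v. v * deriv f t)" by (rule ext) simp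
  ultimately show ?thesis by simp
qed

lemma smooth1_DERIV: "smooth (f :: real \<Rightarrow> real) \<Longrightarrow> (f has_real_derivative deriv f t) (at t)"
  using smooth1_hasfd smooth1_deriv_dd by metis

lemma smooth1_deriv: "smooth (f :: real \<Rightarrow> real) \<Longrightarrow> smooth (deriv f)"
proof -
  assume s: "smooth f"
  have "deriv f = dd f 1" by (rule ext) (rule smooth1_deriv_dd[OF s])
  then show ?thesis using smooth_dd[OF s, of 1] by simp
qed

lemma smooth1_derivn: "smooth (f :: real \<Rightarrow> real) \<Longrightarrow> smooth ((deriv ^^ n) f)"
proof (induction n)
  case 0 then show ?case by simp
next
  case (Suc n) then show ?case using smooth1_deriv by simp
qed

lemma smooth1_chain:
  assumes "smooth (f :: real \<Rightarrow> real)" "(a has_derivative a') (at z within S)"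
  shows "((\<lambda>z. f (a z)) has_derivative (\<lambda>v. a' v * deriv f (a z))) (at z within S)"
  using has_derivative_compose[OF assms(2) smooth1_hasderiv[OF assms(1)]] .

subsection \<open>Schwarz\<close>

lemma smooth_cont: "smooth f \<Longrightarrow> continuous_on S f"
  using smooth_Ck[of f 0] continuous_on_subset by fastforce

lemma smooth2_cont: "smooth2 g \<Longrightarrow> continuous_on S (\<lambda>(s, u). g s u)"
  unfolding smooth2_def case_prod_beta' by (rule smooth_cont)

lemma smooth2_cont_x: "smooth2 g \<Longrightarrow> continuous_on S (\<lambda>u. g s u)"
proof -
  assume a: "smooth2 g"
  have "smooth (\<lambda>u. (\<lambda>p. g (fst p) (snd p)) (s, u))"
    using smooth_compose[OF smooth2_smooth[OF a] smooth_Pair[OF smooth_const smooth_id]] .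
  then show ?thesis by (simp add: smooth_cont)
qed

lemma hvd_x: "smooth2 \<psi> \<Longrightarrow> ((\<lambda>u. \<psi> s u) has_vector_derivative pdx \<psi> s u) (at u within S)"
proof -
  assume a: "smooth2 \<psi>"
  have "((\<lambda>u. \<psi> ((\<lambda>u. s) u) ((\<lambda>u. u) u)) has_derivative
     (\<lambda>v. (\<lambda>v. 0) v *\<^sub>R pdt \<psi> s u + (\<lambda>v. v) v *\<^sub>R pdx \<psi> s u)) (at u within S)"
    by (rule smooth2_chain[OF a]) (auto intro: derivative_intros)
  then show ?thesis by (simp add: has_vector_derivative_def)
qed

lemma hvd_t: "smooth2 \<psi> \<Longrightarrow> ((\<lambda>s. \<psi> s u) has_vector_derivative pdt \<psi> s u) (at s within S)"
proof -
  assume a: "smooth2 \<psi>"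
  have "((\<lambda>s. \<psi> ((\<lambda>s. s) s) ((\<lambda>s. u) s)) has_derivative
     (\<lambda>v. (\<lambda>v. v) v *\<^sub>R pdt \<psi> s u + (\<lambda>v. 0) v *\<^sub>R pdx \<psi> s u)) (at s within S)"
    by (rule smooth2_chain[OF a]) (auto intro: derivative_intros)
  then show ?thesis by (simp add: has_vector_derivative_def)
qed

lemma schwarz:
  fixes \<psi> :: "real \<Rightarrow> real \<Rightarrow> complex"
  assumes a: "smooth2 \<psi>"
  shows "pdx (pdt \<psi>) t y = pdt (pdx \<psi>) t y"
proof -
  define L where "L = y - 1"
  define U where "U = y + 1"
  have b: "smooth2 (pdx \<psi>)" using smooth2_pdx[OF a] .
  have bt: "smooth2 (pdt (pdx \<psi>))" using smooth2_pdt[OF b] .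
  have at: "smooth2 (pdt \<psi>)" using smooth2_pdt[OF a] .
  have ftc: "integral {L..v} (\<lambda>u. pdx \<psi> s u) = \<psi> s v - \<psi> s L" if "L \<le> v" for s v
    using fundamental_theorem_of_calculus[OF that, of "\<lambda>u. \<psi> s u" "\<lambda>u. pdx \<psi> s u"]
      hvd_x[OF a] by (simp add: integral_unique)
  have step2: "pdt \<psi> t v - pdt \<psi> t L = integral {L..v} (\<lambda>u. pdt (pdx \<psi>) t u)" if "L \<le> v" for v
  proof -
    have "((\<lambda>s. integral (cbox L v) (pdx \<psi> s)) has_vector_derivative integral (cbox L v) (pdt (pdx \<psi>) t))
        (at t within UNIV)"
    proof (rule leibniz_rule_vector_derivative)
      show "\<And>x u. x \<in> UNIV \<Longrightarrow> u \<in> cbox L v \<Longrightarrow>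
          ((\<lambda>x. pdx \<psi> x u) has_vector_derivative pdt (pdx \<psi>) x u) (at x within UNIV)"
        using hvd_t[OF b] by blast
      show "\<And>x. x \<in> UNIV \<Longrightarrow> pdx \<psi> x integrable_on cbox L v"
      proof -
        fix x
        have "pdx \<psi> x integrable_on {L..v}"
          using integrable_continuous_interval[OF smooth2_cont_x[OF b, of "{L..v}" x]] by simp
        then show "pdx \<psi> x integrable_on cbox L v" by (simp only: cbox_interval)
      qed
      show "continuous_on (UNIV \<times> cbox L v) (\<lambda>(x, u). pdt (pdx \<psi>) x u)"
        by (rule smooth2_cont[OF bt])
    qed auto
    then have d1: "((\<lambda>s. \<psi> s v - \<psi> s L) has_vector_derivative integral {L..v} (\<lambda>u. pdt (pdx \<psi>) t u)) (at t)"
      using ftc[OF that] by (simp add: cbox_interval)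
    have d2: "((\<lambda>s. \<psi> s v - \<psi> s L) has_vector_derivative pdt \<psi> t v - pdt \<psi> t L) (at t)"
      by (intro has_vector_derivative_diff hvd_t[OF a])
    show ?thesis using vector_derivative_unique_at[OF d2 d1] .
  qed
  have "((\<lambda>v. integral {L..v} (\<lambda>u. pdt (pdx \<psi>) t u)) has_vector_derivative pdt (pdx \<psi>) t y) (at y within {L..U})"
    by (rule integral_has_vector_derivative[OF smooth2_cont_x[OF bt]]) (simp add: L_def U_def)
  then have "((\<lambda>v. integral {L..v} (\<lambda>u. pdt (pdx \<psi>) t u)) has_vector_derivative pdt (pdx \<psi>) t y) (at y within {L<..<U})"
    by (rule has_vector_derivative_within_subset) (simp add: subset_iff)
  then have i1: "((\<lambda>v. integral {L..v} (\<lambda>u. pdt (pdx \<psi>) t u)) has_vector_derivative pdt (pdx \<psi>) t y) (at y)"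
    (is "?P (at y)")
  proof -
    have "at y within {L<..<U} = at y" by (rule at_within_open) (auto simp: L_def U_def)
    then show "?P (at y within {L<..<U}) \<Longrightarrow> ?P (at y)" by simp
  qed
  have i2: "((\<lambda>v. pdt \<psi> t v - pdt \<psi> t L) has_vector_derivative pdt (pdx \<psi>) t y) (at y)"
  proof (rule has_vector_derivative_transform_within_open[OF i1, of "{L<..<U}"])
    show "open {L<..<U}" by simp
    show "y \<in> {L<..<U}" by (simp add: L_def U_def)
    fix v assume "v \<in> {L<..<U}"
    then have "L \<le> v" by simp
    then show "integral {L..v} (\<lambda>u. pdt (pdx \<psi>) t u) = pdt \<psi> t v - pdt \<psi> t L"
      using step2 by simp
  qed
  have i3: "((\<lambda>v. pdt \<psi> t v - pdt \<psi> t L) has_vector_derivative pdx (pdt \<psi>) t y) (at y)"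
    using has_vector_derivative_diff[OF hvd_x[OF at] has_vector_derivative_const] by simp
  show ?thesis using vector_derivative_unique_at[OF i3 i2] .
qed

lemma s2d:
  assumes "smooth2 f"
  shows "((\<lambda>p. f (fst p) (snd p)) has_derivative
    (\<lambda>v. fst v *\<^sub>R pdt f (fst p0) (snd p0) + snd v *\<^sub>R pdx f (fst p0) (snd p0))) (at p0)"
  using smooth2_chain[OF assms, of fst fst p0 UNIV snd snd]
  by (simp add: bounded_linear.has_derivative[OF bounded_linear_fst has_derivative_ident]
      bounded_linear.has_derivative[OF bounded_linear_snd has_derivative_ident])

lemma smooth2_add[simp]: "smooth2 f \<Longrightarrow> smooth2 g \<Longrightarrow> smooth2 (\<lambda>s y. f s y + g s y)"
  unfolding smooth2_def by (rule smooth_add)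
lemma smooth2_diff[simp]: "smooth2 f \<Longrightarrow> smooth2 g \<Longrightarrow> smooth2 (\<lambda>s y. f s y - g s y)"
  unfolding smooth2_def by (rule smooth_diff)
lemma smooth2_minus[simp]: "smooth2 f \<Longrightarrow> smooth2 (\<lambda>s y. - f s y)"
  unfolding smooth2_def by (rule smooth_minus)
lemma smooth2_mult[simp]: "smooth2 f \<Longrightarrow> smooth2 g \<Longrightarrow> smooth2 (\<lambda>s y. f s y * (g s y :: 'a::real_normed_algebra))"
  unfolding smooth2_def by (rule smooth_mult)
lemma smooth2_scaleR[simp]: "smooth2 f \<Longrightarrow> smooth2 g \<Longrightarrow> smooth2 (\<lambda>s y. f s y *\<^sub>R g s y)"
  unfolding smooth2_def by (rule smooth_scaleR)
lemma smooth2_of_real[simp]: "smooth2 f \<Longrightarrow> smooth2 (\<lambda>s y. (of_real (f s y) :: 'a::real_normed_algebra_1))"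
  unfolding smooth2_def by (rule smooth_of_real)
lemma smooth2_Re[simp]: "smooth2 f \<Longrightarrow> smooth2 (\<lambda>s y. Re (f s y))"
  unfolding smooth2_def by (rule smooth_Re)
lemma smooth2_Im[simp]: "smooth2 f \<Longrightarrow> smooth2 (\<lambda>s y. Im (f s y))"
  unfolding smooth2_def by (rule smooth_Im)
lemma smooth2_const[simp]: "smooth2 (\<lambda>s y. c)"
  unfolding smooth2_def by simp
lemma smooth2_fst[simp]: "smooth2 (\<lambda>s y. s)"
  unfolding smooth2_def by (rule smooth_fst[OF smooth_id])
lemma smooth2_snd[simp]: "smooth2 (\<lambda>s y. y)"
  unfolding smooth2_def by (rule smooth_snd[OF smooth_id])
lemma smooth2_fun_t[simp]: "smooth (c :: real \<Rightarrow> 'a::real_normed_vector) \<Longrightarrow> smooth2 (\<lambda>s y. c s)"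
  unfolding smooth2_def by (rule smooth_compose[OF _ smooth_fst[OF smooth_id]])
lemma smooth2_comp3[simp]:
  "smooth (g :: real \<times> real \<times> complex \<Rightarrow> 'a::real_normed_vector) \<Longrightarrow> smooth2 \<psi> \<Longrightarrow> smooth2 (\<lambda>s y. g (s, y, \<psi> s y))"
  unfolding smooth2_def
  by (rule smooth_compose, assumption,
      intro smooth_Pair smooth_fst smooth_snd smooth_id, assumption)

lemma pdx_add[simp]: "smooth2 f \<Longrightarrow> smooth2 g \<Longrightarrow> pdx (\<lambda>s y. f s y + g s y) t x = pdx f t x + pdx g t x"
  by (rule pdx_eq2, rule has_derivative_add[OF s2d s2d], auto)
lemma pdt_add[simp]: "smooth2 f \<Longrightarrow> smooth2 g \<Longrightarrow> pdt (\<lambda>s y. f s y + g s y) t x = pdt f t x + pdt g t x"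
  by (rule pdt_eq2, rule has_derivative_add[OF s2d s2d], auto)
lemma pdx_diff[simp]: "smooth2 f \<Longrightarrow> smooth2 g \<Longrightarrow> pdx (\<lambda>s y. f s y - g s y) t x = pdx f t x - pdx g t x"
  by (rule pdx_eq2, rule has_derivative_diff[OF s2d s2d], auto)
lemma pdt_diff[simp]: "smooth2 f \<Longrightarrow> smooth2 g \<Longrightarrow> pdt (\<lambda>s y. f s y - g s y) t x = pdt f t x - pdt g t x"
  by (rule pdt_eq2, rule has_derivative_diff[OF s2d s2d], auto)
lemma pdx_minus[simp]: "smooth2 f \<Longrightarrow> pdx (\<lambda>s y. - f s y) t x = - pdx f t x"
  by (rule pdx_eq2, rule has_derivative_minus[OF s2d], auto)
lemma pdt_minus[simp]: "smooth2 f \<Longrightarrow> pdt (\<lambda>s y. - f s y) t x = - pdt f t x"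
  by (rule pdt_eq2, rule has_derivative_minus[OF s2d], auto)
lemma pdx_mult[simp]: "smooth2 f \<Longrightarrow> smooth2 g \<Longrightarrow>
  pdx (\<lambda>s y. f s y * (g s y :: 'a::real_normed_algebra)) t x = f t x * pdx g t x + pdx f t x * g t x"
  by (rule pdx_eq2, rule has_derivative_mult[OF s2d s2d], auto)
lemma pdt_mult[simp]: "smooth2 f \<Longrightarrow> smooth2 g \<Longrightarrow>
  pdt (\<lambda>s y. f s y * (g s y :: 'a::real_normed_algebra)) t x = f t x * pdt g t x + pdt f t x * g t x"
  by (rule pdt_eq2, rule has_derivative_mult[OF s2d s2d], auto)
lemma pdx_scaleR[simp]: "smooth2 f \<Longrightarrow> smooth2 g \<Longrightarrow>
  pdx (\<lambda>s y. f s y *\<^sub>R g s y) t x = f t x *\<^sub>R pdx g t x + pdx f t x *\<^sub>R g t x"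
  by (rule pdx_eq2, rule has_derivative_scaleR[OF s2d s2d], auto)
lemma pdt_scaleR[simp]: "smooth2 f \<Longrightarrow> smooth2 g \<Longrightarrow>
  pdt (\<lambda>s y. f s y *\<^sub>R g s y) t x = f t x *\<^sub>R pdt g t x + pdt f t x *\<^sub>R g t x"
  by (rule pdt_eq2, rule has_derivative_scaleR[OF s2d s2d], auto)
lemma pdx_of_real[simp]: "smooth2 f \<Longrightarrow> pdx (\<lambda>s y. (of_real (f s y) :: 'a::real_normed_algebra_1)) t x = of_real (pdx f t x)"
  by (rule pdx_eq2, rule bounded_linear.has_derivative[OF bounded_linear_of_real s2d], auto)
lemma pdt_of_real[simp]: "smooth2 f \<Longrightarrow> pdt (\<lambda>s y. (of_real (f s y) :: 'a::real_normed_algebra_1)) t x = of_real (pdt f t x)"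
  by (rule pdt_eq2, rule bounded_linear.has_derivative[OF bounded_linear_of_real s2d], auto)
lemma pdx_Re[simp]: "smooth2 f \<Longrightarrow> pdx (\<lambda>s y. Re (f s y)) t x = Re (pdx f t x)"
  by (rule pdx_eq2, rule bounded_linear.has_derivative[OF bounded_linear_Re s2d], auto)
lemma pdt_Re[simp]: "smooth2 f \<Longrightarrow> pdt (\<lambda>s y. Re (f s y)) t x = Re (pdt f t x)"
  by (rule pdt_eq2, rule bounded_linear.has_derivative[OF bounded_linear_Re s2d], auto)
lemma pdx_Im[simp]: "smooth2 f \<Longrightarrow> pdx (\<lambda>s y. Im (f s y)) t x = Im (pdx f t x)"
  by (rule pdx_eq2, rule bounded_linear.has_derivative[OF bounded_linear_Im s2d], auto)
lemma pdt_Im[simp]: "smooth2 f \<Longrightarrow> pdt (\<lambda>s y. Im (f s y)) t x = Im (pdt f t x)"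
  by (rule pdt_eq2, rule bounded_linear.has_derivative[OF bounded_linear_Im s2d], auto)
lemma pdx_const[simp]: "pdx (\<lambda>s y. c) t x = 0"
  by (simp add: pdx_def)
lemma pdt_const[simp]: "pdt (\<lambda>s y. c) t x = 0"
  by (simp add: pdt_def)
lemma pdx_fun_t[simp]: "pdx (\<lambda>s y. c s) t x = 0"
  by (simp add: pdx_def)
lemma pdt_fun_t[simp]: "smooth (c :: real \<Rightarrow> real) \<Longrightarrow> pdt (\<lambda>s y. c s) t x = deriv c t"
  by (simp add: pdt_def vector_derivative_at smooth1_DERIV has_real_derivative_iff_has_vector_derivative[symmetric])
lemma pdt_snd[simp]: "pdt (\<lambda>s y. y) t x = 0"
  by (simp add: pdt_def)
lemma pdx_snd[simp]: "pdx (\<lambda>s y. y) t x = 1"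
  by (simp add: pdx_def)
lemma pdt_fst[simp]: "pdt (\<lambda>s y. s) t x = 1"
  by (simp add: pdt_def)

definition Dt :: "(real \<times> real \<times> complex \<Rightarrow> 'a::real_normed_vector) \<Rightarrow> real \<times> real \<times> complex \<Rightarrow> 'a"
  where "Dt f = dd f (1, 0, 0)"
definition Dx :: "(real \<times> real \<times> complex \<Rightarrow> 'a::real_normed_vector) \<Rightarrow> real \<times> real \<times> complex \<Rightarrow> 'a"
  where "Dx f = dd f (0, 1, 0)"
definition Dr :: "(real \<times> real \<times> complex \<Rightarrow> 'a::real_normed_vector) \<Rightarrow> real \<times> real \<times> complex \<Rightarrow> 'a"
  where "Dr f = dd f (0, 0, 1)"
definition Di :: "(real \<times> real \<times> complex \<Rightarrow> 'a::real_normed_vector) \<Rightarrow> real \<times> real \<times> complex \<Rightarrow> 'a"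
  where "Di f = dd f (0, 0, \<i>)"

lemma smooth_D[simp]: "smooth f \<Longrightarrow> smooth (Dt f)" "smooth f \<Longrightarrow> smooth (Dx f)"
  "smooth f \<Longrightarrow> smooth (Dr f)" "smooth f \<Longrightarrow> smooth (Di f)"
  by (simp_all add: Dt_def Dx_def Dr_def Di_def smooth_dd)

lemma dd_split:
  assumes "smooth f"
  shows "dd f (a, b, w) q = a *\<^sub>R Dt f q + b *\<^sub>R Dx f q + Re w *\<^sub>R Dr f q + Im w *\<^sub>R Di f q"
proof -
  have "(a, b, w) = a *\<^sub>R (1, 0, 0) + b *\<^sub>R (0, 1, 0) + Re w *\<^sub>R (0, 0, 1) + Im w *\<^sub>R (0::real, 0::real, \<i>)"
    by (simp add: complex_eq_iff)
  then show ?thesis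
    by (simp only: dd_add[OF assms] dd_scaleR[OF assms] Dt_def Dx_def Dr_def Di_def)
qed

lemma pdx_comp3[simp]:
  assumes "smooth g" "smooth2 \<psi>"
  shows "pdx (\<lambda>s y. g (s, y, \<psi> s y)) t x =
    Dx g (t, x, \<psi> t x) + Re (pdx \<psi> t x) *\<^sub>R Dr g (t, x, \<psi> t x) + Im (pdx \<psi> t x) *\<^sub>R Di g (t, x, \<psi> t x)"
proof -
  have "((\<lambda>p. (fst p, snd p, \<psi> (fst p) (snd p))) has_derivative
      (\<lambda>v. (fst v, snd v, fst v *\<^sub>R pdt \<psi> t x + snd v *\<^sub>R pdx \<psi> t x))) (at (t, x))"
    by (intro has_derivative_Pair s2d[OF assms(2), of "(t, x)", simplified]
        bounded_linear.has_derivative[OF bounded_linear_fst has_derivative_ident]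
        bounded_linear.has_derivative[OF bounded_linear_snd has_derivative_ident])
  from smooth_chain[OF assms(1) this]
  show ?thesis by (rule pdx_eq2) (simp add: dd_split[OF assms(1)])
qed

lemma pdt_comp3[simp]:
  assumes "smooth g" "smooth2 \<psi>"
  shows "pdt (\<lambda>s y. g (s, y, \<psi> s y)) t x =
    Dt g (t, x, \<psi> t x) + Re (pdt \<psi> t x) *\<^sub>R Dr g (t, x, \<psi> t x) + Im (pdt \<psi> t x) *\<^sub>R Di g (t, x, \<psi> t x)"
proof -
  have "((\<lambda>p. (fst p, snd p, \<psi> (fst p) (snd p))) has_derivative
      (\<lambda>v. (fst v, snd v, fst v *\<^sub>R pdt \<psi> t x + snd v *\<^sub>R pdx \<psi> t x))) (at (t, x))"
    by (intro has_derivative_Pair s2d[OF assms(2), of "(t, x)", simplified]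
        bounded_linear.has_derivative[OF bounded_linear_fst has_derivative_ident]
        bounded_linear.has_derivative[OF bounded_linear_snd has_derivative_ident])
  from smooth_chain[OF assms(1) this]
  show ?thesis by (rule pdt_eq2) (simp add: dd_split[OF assms(1)])
qed

lemma smooth2_div_const[simp]: "smooth2 f \<Longrightarrow> smooth2 (\<lambda>s y. f s y / (c :: 'a::{real_normed_field}))"
proof -
  assume a: "smooth2 f"
  have "smooth2 (\<lambda>s y. f s y * inverse c)" using a by simp
  then show ?thesis by (simp add: divide_inverse)
qed

lemma pdx_div_const[simp]: "smooth2 f \<Longrightarrow> pdx (\<lambda>s y. f s y / (c :: 'a::{real_normed_field})) t x = pdx f t x / c"
proof -
  assume a: "smooth2 f"
  have "pdx (\<lambda>s y. f s y * inverse c) t x = pdx f t x * inverse c" using a by simp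
  then show ?thesis by (simp add: divide_inverse)
qed

lemma pdt_div_const[simp]: "smooth2 f \<Longrightarrow> pdt (\<lambda>s y. f s y / (c :: 'a::{real_normed_field})) t x = pdt f t x / c"
proof -
  assume a: "smooth2 f"
  have "pdt (\<lambda>s y. f s y * inverse c) t x = pdt f t x * inverse c" using a by simp
  then show ?thesis by (simp add: divide_inverse)
qed

definition redQ :: "(real \<Rightarrow> real) \<Rightarrow> (real \<Rightarrow> real \<Rightarrow> real) \<Rightarrow> (real \<Rightarrow> real \<Rightarrow> complex) \<Rightarrow> (real \<Rightarrow> real \<Rightarrow> complex) \<Rightarrow> vf" where
  "redQ \<tau>0 \<xi>0 H0 F = (\<lambda>q. \<tau>0 (fst q), \<lambda>q. \<xi>0 (fst q) (fst (snd q)),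
     \<lambda>q. H0 (fst q) (fst (snd q)) + F (fst q) (fst (snd q)) * snd (snd q))"

lemma formula2:
  fixes \<psi> :: "real \<Rightarrow> real \<Rightarrow> complex"
  assumes s: "smooth \<tau>0" "smooth2 \<xi>0" "smooth2 H0" "smooth2 F" "smooth2 \<psi>"
  shows "prolong_schr V (redQ \<tau>0 \<xi>0 H0 F) \<psi> t x =
    \<i> * (pdt H0 t x + pdt F t x * \<psi> t x + F t x * pdt \<psi> t x - of_real (deriv \<tau>0 t) * pdt \<psi> t x
          - of_real (pdt \<xi>0 t x) * pdx \<psi> t x)
    + (pdx (pdx H0) t x + pdx (pdx F) t x * \<psi> t x + 2 * pdx F t x * pdx \<psi> t x + F t x * pdx (pdx \<psi>) t x
       - 2 * of_real (pdx \<xi>0 t x) * pdx (pdx \<psi>) t x - of_real (pdx (pdx \<xi>0) t x) * pdx \<psi> t x)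
    + of_real (\<tau>0 t * pdt V t x + \<xi>0 t x * pdx V t x) * \<psi> t x + of_real (V t x) * (H0 t x + F t x * \<psi> t x)" (is "?lhs = ?rhs")
proof -
  note ps = s(5) smooth2_pdt[OF s(5)] smooth2_pdx[OF s(5)] smooth2_pdx[OF smooth2_pdx[OF s(5)]]
     smooth2_pdt[OF smooth2_pdx[OF s(5)]] smooth2_pdx[OF smooth2_pdt[OF s(5)]]
  note ss = s(1-4) smooth2_pdx[OF s(2)] smooth2_pdx[OF s(3)] smooth2_pdx[OF s(4)]
  have sw1: "pdt (pdx \<psi>) = pdx (pdt \<psi>)" by (rule ext)+ (rule schwarz[OF s(5), symmetric])
  have sw2: "pdt (pdx (pdx \<psi>)) = pdx (pdx (pdt \<psi>))"
  proof (rule ext)+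
    fix a b
    have "pdt (pdx (pdx \<psi>)) a b = pdx (pdt (pdx \<psi>)) a b" by (rule schwarz[OF smooth2_pdx[OF s(5)], symmetric])
    then show "pdt (pdx (pdx \<psi>)) a b = pdx (pdx (pdt \<psi>)) a b" by (simp add: sw1)
  qed
  define Qc where "Qc = (\<lambda>s y. H0 s y + F s y * \<psi> s y - of_real (\<tau>0 s) * pdt \<psi> s y - of_real (\<xi>0 s y) * pdx \<psi> s y)"
  have Qx: "pdx Qc = (\<lambda>s y. pdx H0 s y + (F s y * pdx \<psi> s y + pdx F s y * \<psi> s y)
      - of_real (\<tau>0 s) * pdx (pdt \<psi>) s y
      - (of_real (\<xi>0 s y) * pdx (pdx \<psi>) s y + of_real (pdx \<xi>0 s y) * pdx \<psi> s y))"
    by (rule ext)+ (simp add: Qc_def ps ss)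
  have Qxx: "pdx (pdx Qc) t x = pdx (pdx H0) t x + (F t x * pdx (pdx \<psi>) t x + pdx F t x * pdx \<psi> t x
      + (pdx F t x * pdx \<psi> t x + pdx (pdx F) t x * \<psi> t x))
      - of_real (\<tau>0 t) * pdx (pdx (pdt \<psi>)) t x
      - (of_real (\<xi>0 t x) * pdx (pdx (pdx \<psi>)) t x + of_real (pdx \<xi>0 t x) * pdx (pdx \<psi>) t x
         + (of_real (pdx \<xi>0 t x) * pdx (pdx \<psi>) t x + of_real (pdx (pdx \<xi>0) t x) * pdx \<psi> t x))"
    unfolding Qx by (simp add: ps ss smooth2_pdx)
  have Qt: "pdt Qc t x = pdt H0 t x + (F t x * pdt \<psi> t x + pdt F t x * \<psi> t x)
      - (of_real (\<tau>0 t) * pdt (pdt \<psi>) t x + of_real (deriv \<tau>0 t) * pdt \<psi> t x)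
      - (of_real (\<xi>0 t x) * pdt (pdx \<psi>) t x + of_real (pdt \<xi>0 t x) * pdx \<psi> t x)"
    by (simp add: Qc_def ps ss)
  have "prolong_schr V (redQ \<tau>0 \<xi>0 H0 F) \<psi> t x =
     \<i> * (pdt Qc t x + of_real (\<tau>0 t) * pdt (pdt \<psi>) t x + of_real (\<xi>0 t x) * pdx (pdt \<psi>) t x)
     + (pdx (pdx Qc) t x + of_real (\<tau>0 t) * pdt (pdx (pdx \<psi>)) t x + of_real (\<xi>0 t x) * pdx (pdx (pdx \<psi>)) t x)
     + of_real (\<tau>0 t * pdt V t x + \<xi>0 t x * pdx V t x) * \<psi> t x + of_real (V t x) * (H0 t x + F t x * \<psi> t x)"
    by (simp add: prolong_schr_def redQ_def Let_def Qc_def)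
  also have "\<dots> = ?rhs"
    unfolding Qt Qxx sw1 sw2 by (simp add: algebra_simps)
  finally show ?thesis .
qed

lemma smooth2_lift: "smooth2 g \<Longrightarrow> smooth (\<lambda>q::real \<times> real \<times> complex. g (fst q) (fst (snd q)))"
  unfolding smooth2_def
  using smooth_compose[of "\<lambda>p. g (fst p) (snd p)" "\<lambda>q::real \<times> real \<times> complex. (fst q, fst (snd q))"]
  by (simp add: smooth_Pair smooth_fst smooth_snd)

lemma smooth_lift1: "smooth (f :: real \<Rightarrow> 'a::real_normed_vector) \<Longrightarrow> smooth (\<lambda>q::real \<times> real \<times> complex. f (fst q))"
  using smooth_compose[of f "\<lambda>q::real \<times> real \<times> complex. fst q"] by (simp add: smooth_fst)

lemma redQ_smooth:
  assumes "smooth \<tau>0" "smooth2 \<xi>0" "smooth2 H0" "smooth2 F"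
  shows "case redQ \<tau>0 \<xi>0 H0 F of (\<tau>, \<xi>, \<eta>) \<Rightarrow> smooth \<tau> \<and> smooth \<xi> \<and> smooth \<eta>"
  unfolding redQ_def
  using smooth_lift1[OF assms(1)] smooth2_lift[OF assms(2)]
    smooth_add[OF smooth2_lift[OF assms(3)] smooth_mult[OF smooth2_lift[OF assms(4)] smooth_snd[OF smooth_snd[OF smooth_id]]]]
  by simp

lemma sup_dir:
  fixes V :: "real \<Rightarrow> real \<Rightarrow> real"
  assumes st: "smooth \<tau>" and sc: "smooth chi" and ss: "smooth \<sigma>" and det: "det_eq V \<tau> chi \<sigma>"
    and sol: "is_solution V \<eta>0"
  shows "is_lie_symmetry V (vf_add (vfD \<tau>) (vf_add (vfG chi) (vf_add (vf_scale c vfI) (vf_add (vfM \<sigma>) (vfZ \<eta>0)))))"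
proof -
  define \<xi>0 where "\<xi>0 = (\<lambda>t x. 1/2 * deriv \<tau> t * x + chi t)"
  define F where "F = (\<lambda>t x. complex_of_real (c - 1/4 * deriv \<tau> t)
      + \<i> * complex_of_real (1/8 * deriv (deriv \<tau>) t * (x * x) + 1/2 * deriv chi t * x + \<sigma> t))"
  have s1: "smooth (deriv \<tau>)" "smooth (deriv (deriv \<tau>))" "smooth (deriv chi)"
    using smooth1_deriv st sc by blast+
  have sxi: "smooth2 \<xi>0" unfolding \<xi>0_def using s1 sc by simp
  have sF: "smooth2 F" unfolding F_def using s1 ss by simp
  have sH: "smooth2 \<eta>0" using sol by (simp add: is_solution_def smooth2_iff)
  have Qeq: "vf_add (vfD \<tau>) (vf_add (vfG chi) (vf_add (vf_scale c vfI) (vf_add (vfM \<sigma>) (vfZ \<eta>0))))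
      = redQ \<tau> \<xi>0 \<eta>0 F"
    unfolding vf_add_def vfD_def vfG_def vf_scale_def vfI_def vfM_def vfZ_def redQ_def \<xi>0_def F_def
    by (auto simp: fun_eq_iff algebra_simps power2_eq_square numeral_2_eq_2)
  show ?thesis
    unfolding is_lie_symmetry_def Qeq
  proof (intro conjI allI impI)
    show "case redQ \<tau> \<xi>0 \<eta>0 F of (\<tau>, \<xi>, \<eta>) \<Rightarrow> smooth \<tau> \<and> smooth \<xi> \<and> smooth \<eta>"
      by (rule redQ_smooth[OF st sxi sH sF])
    fix \<psi> :: "real \<Rightarrow> real \<Rightarrow> complex" and t x
    assume "smooth (\<lambda>(t, x). \<psi> t x)" and hs: "schr V \<psi> t x = 0"
    then have sp: "smooth2 \<psi>" by (simp add: smooth2_iff)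
    have h0: "\<i> * pdt \<eta>0 t x + pdx (pdx \<eta>0) t x + of_real (V t x) * \<eta>0 t x = 0"
      using sol by (simp add: is_solution_def schr_def)
    have hs': "\<i> * pdt \<psi> t x + pdx (pdx \<psi>) t x + of_real (V t x) * \<psi> t x = 0"
      using hs by (simp add: schr_def)
    have dxi: "pdt \<xi>0 t x = 1/2 * deriv (deriv \<tau>) t * x + deriv chi t"
        "pdx \<xi>0 t x = 1/2 * deriv \<tau> t" "pdx (pdx \<xi>0) t x = 0"
    proof -
      show "pdt \<xi>0 t x = 1/2 * deriv (deriv \<tau>) t * x + deriv chi t" unfolding \<xi>0_def using s1 sc by simp
      have "pdx \<xi>0 = (\<lambda>t x. 1/2 * deriv \<tau> t)" unfolding \<xi>0_def using s1 sc by (auto simp: fun_eq_iff)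
      then show "pdx \<xi>0 t x = 1/2 * deriv \<tau> t" "pdx (pdx \<xi>0) t x = 0" by simp_all
    qed
    have dF: "pdt F t x = complex_of_real (- 1/4 * deriv (deriv \<tau>) t)
        + \<i> * complex_of_real (1/8 * deriv (deriv (deriv \<tau>)) t * (x * x) + 1/2 * deriv (deriv chi) t * x + deriv \<sigma> t)"
        "pdx F t x = \<i> * complex_of_real (1/4 * deriv (deriv \<tau>) t * x + 1/2 * deriv chi t)"
        "pdx (pdx F) t x = \<i> * complex_of_real (1/4 * deriv (deriv \<tau>) t)"
    proof -
      have s2: "smooth (deriv (deriv (deriv \<tau>)))" "smooth (deriv (deriv chi))" using smooth1_deriv s1 by blast+
      show "pdt F t x = complex_of_real (- 1/4 * deriv (deriv \<tau>) t)
        + \<i> * complex_of_real (1/8 * deriv (deriv (deriv \<tau>)) t * (x * x) + 1/2 * deriv (deriv chi) t * x + deriv \<sigma> t)"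
        unfolding F_def using s1 s2 ss by simp
      have "pdx F = (\<lambda>t x. \<i> * complex_of_real (1/4 * deriv (deriv \<tau>) t * x + 1/2 * deriv chi t))"
        unfolding F_def using s1 ss by (auto simp: fun_eq_iff algebra_simps)
      then show "pdx F t x = \<i> * complex_of_real (1/4 * deriv (deriv \<tau>) t * x + 1/2 * deriv chi t)"
        "pdx (pdx F) t x = \<i> * complex_of_real (1/4 * deriv (deriv \<tau>) t)"
        using s1 by (simp_all add: algebra_simps)
    qed
    have detx: "\<tau> t * pdt V t x + (1/2 * deriv \<tau> t * x + chi t) * pdx V t x + deriv \<tau> t * V t x
       = 1/8 * deriv (deriv (deriv \<tau>)) t * x\<^sup>2 + 1/2 * deriv (deriv chi) t * x + deriv \<sigma> t"
      using det by (simp add: det_eq_def numeral_3_eq_3 numeral_2_eq_2)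
    define S where "S = \<i> * pdt \<psi> t x + pdx (pdx \<psi>) t x + of_real (V t x) * \<psi> t x"
    define E4 where "E4 = \<i> * pdt \<eta>0 t x + pdx (pdx \<eta>0) t x + of_real (V t x) * \<eta>0 t x"
    define C2 where "C2 = complex_of_real (deriv \<tau> t) - 2 * of_real (pdx \<xi>0 t x)"
    define C1 where "C1 = - \<i> * of_real (pdt \<xi>0 t x) + 2 * pdx F t x - of_real (pdx (pdx \<xi>0) t x)"
    define C0 where "C0 = \<i> * pdt F t x + pdx (pdx F) t x + of_real (\<tau> t * pdt V t x + \<xi>0 t x * pdx V t x)
        + of_real (deriv \<tau> t * V t x)"
    have "prolong_schr V (redQ \<tau> \<xi>0 \<eta>0 F) \<psi> t x =
       E4 + (F t x - of_real (deriv \<tau> t)) * S + C2 * pdx (pdx \<psi>) t x + C1 * pdx \<psi> t x + C0 * \<psi> t x"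
      unfolding formula2[OF st sxi sH sF sp] S_def E4_def C2_def C1_def C0_def
      by (simp add: algebra_simps)
    moreover have "E4 = 0" "S = 0" using h0 hs' by (simp_all add: E4_def S_def)
    moreover have "C2 = 0" unfolding C2_def dxi by simp
    moreover have "C1 = 0" unfolding C1_def dxi dF by (simp add: complex_eq_iff)
    moreover have "C0 = 0"
    proof -
      have "\<tau> t * pdt V t x + \<xi>0 t x * pdx V t x + deriv \<tau> t * V t x
        = 1/8 * deriv (deriv (deriv \<tau>)) t * x\<^sup>2 + 1/2 * deriv (deriv chi) t * x + deriv \<sigma> t"
        using detx by (simp add: \<xi>0_def)
      then show ?thesis unfolding C0_def dF
        by (simp add: complex_eq_iff power2_eq_square algebra_simps)
    qed
    ultimately show "prolong_schr V (redQ \<tau> \<xi>0 \<eta>0 F) \<psi> t x = 0" by simp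
  qed
qed

definition dtt :: "(real \<times> real \<times> complex \<Rightarrow> 'a::real_normed_vector) \<Rightarrow> real \<times> real \<times> complex \<Rightarrow> complex \<Rightarrow> 'a" where
  "dtt f q e = Dt f q + Re e *\<^sub>R Dr f q + Im e *\<^sub>R Di f q"
definition dtx :: "(real \<times> real \<times> complex \<Rightarrow> 'a::real_normed_vector) \<Rightarrow> real \<times> real \<times> complex \<Rightarrow> complex \<Rightarrow> 'a" where
  "dtx f q a = Dx f q + Re a *\<^sub>R Dr f q + Im a *\<^sub>R Di f q"
definition dtxx :: "(real \<times> real \<times> complex \<Rightarrow> 'a::real_normed_vector) \<Rightarrow> real \<times> real \<times> complex \<Rightarrow> complex \<Rightarrow> complex \<Rightarrow> 'a" where
  "dtxx f q a B = dtx (Dx f) q a + Re B *\<^sub>R Dr f q + Re a *\<^sub>R dtx (Dr f) q a + Im B *\<^sub>R Di f q + Im a *\<^sub>R dtx (Di f) q a"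

definition PF :: "(real \<Rightarrow> real \<Rightarrow> real) \<Rightarrow> (real \<times> real \<times> complex \<Rightarrow> real) \<Rightarrow> (real \<times> real \<times> complex \<Rightarrow> real)
   \<Rightarrow> (real \<times> real \<times> complex \<Rightarrow> complex) \<Rightarrow> real \<Rightarrow> real \<Rightarrow> complex \<Rightarrow> complex \<Rightarrow> complex \<Rightarrow> complex \<Rightarrow> complex \<Rightarrow> complex" where
  "PF V \<tau> \<xi> \<eta> t x z e a B w =
    \<i> * (dtt \<eta> (t, x, z) e - of_real (dtt \<tau> (t, x, z) e) * e - of_real (dtt \<xi> (t, x, z) e) * a)
    + dtxx \<eta> (t, x, z) a B - of_real (dtxx \<tau> (t, x, z) a B) * e - 2 * of_real (dtx \<tau> (t, x, z) a) * w
    - of_real (dtxx \<xi> (t, x, z) a B) * a - 2 * of_real (dtx \<xi> (t, x, z) a) * B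
    + of_real (\<tau> (t, x, z) * pdt V t x + \<xi> (t, x, z) * pdx V t x) * z + of_real (V t x) * \<eta> (t, x, z)"

definition dxc :: "(real \<Rightarrow> real \<Rightarrow> complex) \<Rightarrow> (real \<times> real \<times> complex \<Rightarrow> 'a::real_normed_vector) \<Rightarrow> real \<Rightarrow> real \<Rightarrow> 'a"
  where "dxc \<psi> f s y = Dx f (s, y, \<psi> s y) + Re (pdx \<psi> s y) *\<^sub>R Dr f (s, y, \<psi> s y)
      + Im (pdx \<psi> s y) *\<^sub>R Di f (s, y, \<psi> s y)"

lemma sdx: "smooth2 \<psi> \<Longrightarrow> smooth f \<Longrightarrow> smooth2 (dxc \<psi> f)"
proof -
  assume a: "smooth2 \<psi>" "smooth f"
  have "smooth2 (\<lambda>s y. Dx f (s, y, \<psi> s y) + Re (pdx \<psi> s y) *\<^sub>R Dr f (s, y, \<psi> s y)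
      + Im (pdx \<psi> s y) *\<^sub>R Di f (s, y, \<psi> s y))" using a smooth2_pdx[OF a(1)] by simp
  then show ?thesis by (simp add: dxc_def[abs_def])
qed

lemma pdxdx: "smooth2 \<psi> \<Longrightarrow> smooth f \<Longrightarrow> pdx (dxc \<psi> f) t x = dtxx f (t, x, \<psi> t x) (pdx \<psi> t x) (pdx (pdx \<psi>) t x)"
proof -
  assume a: "smooth2 \<psi>" "smooth f"
  have "pdx (dxc \<psi> f) t x = pdx (\<lambda>s y. Dx f (s, y, \<psi> s y) + Re (pdx \<psi> s y) *\<^sub>R Dr f (s, y, \<psi> s y)
      + Im (pdx \<psi> s y) *\<^sub>R Di f (s, y, \<psi> s y)) t x" by (simp add: dxc_def[abs_def])
  also have "\<dots> = dtxx f (t, x, \<psi> t x) (pdx \<psi> t x) (pdx (pdx \<psi>) t x)"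
    using a smooth2_pdx[OF a(1)] smooth2_pdx[OF smooth2_pdx[OF a(1)]] by (simp add: dtxx_def dtx_def algebra_simps)
  finally show ?thesis .
qed

lemma dxv: "smooth2 \<psi> \<Longrightarrow> dxc \<psi> f t x = dtx f (t, x, \<psi> t x) (pdx \<psi> t x)"
  by (simp add: dxc_def dtx_def)

lemma formula1:
  fixes \<psi> :: "real \<Rightarrow> real \<Rightarrow> complex"
  assumes s: "smooth \<tau>" "smooth \<xi>" "smooth \<eta>" "smooth2 \<psi>"
  shows "prolong_schr V (\<tau>, \<xi>, \<eta>) \<psi> t x =
     PF V \<tau> \<xi> \<eta> t x (\<psi> t x) (pdt \<psi> t x) (pdx \<psi> t x) (pdx (pdx \<psi>) t x) (pdx (pdt \<psi>) t x)"
proof -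
  note ps = s(4) smooth2_pdt[OF s(4)] smooth2_pdx[OF s(4)] smooth2_pdx[OF smooth2_pdx[OF s(4)]]
     smooth2_pdt[OF smooth2_pdx[OF s(4)]] smooth2_pdx[OF smooth2_pdt[OF s(4)]]
  have sw1: "pdt (pdx \<psi>) = pdx (pdt \<psi>)" by (rule ext)+ (rule schwarz[OF s(4), symmetric])
  have sw2: "pdt (pdx (pdx \<psi>)) = pdx (pdx (pdt \<psi>))"
  proof (rule ext)+
    fix a b
    have "pdt (pdx (pdx \<psi>)) a b = pdx (pdt (pdx \<psi>)) a b" by (rule schwarz[OF smooth2_pdx[OF s(4)], symmetric])
    then show "pdt (pdx (pdx \<psi>)) a b = pdx (pdx (pdt \<psi>)) a b" by (simp add: sw1)
  qed
  define Qc where "Qc = (\<lambda>s y. \<eta> (s, y, \<psi> s y) - of_real (\<tau> (s, y, \<psi> s y)) * pdt \<psi> s y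
      - of_real (\<xi> (s, y, \<psi> s y)) * pdx \<psi> s y)"
  have Qx: "pdx Qc = (\<lambda>s y. dxc \<psi> \<eta> s y
      - (of_real (\<tau> (s, y, \<psi> s y)) * pdx (pdt \<psi>) s y + of_real (dxc \<psi> \<tau> s y) * pdt \<psi> s y)
      - (of_real (\<xi> (s, y, \<psi> s y)) * pdx (pdx \<psi>) s y + of_real (dxc \<psi> \<xi> s y) * pdx \<psi> s y))"
    by (rule ext)+ (simp add: Qc_def ps s dxc_def)
  have Qxx: "pdx (pdx Qc) t x = dtxx \<eta> (t, x, \<psi> t x) (pdx \<psi> t x) (pdx (pdx \<psi>) t x)
      - (of_real (\<tau> (t, x, \<psi> t x)) * pdx (pdx (pdt \<psi>)) t x + of_real (dxc \<psi> \<tau> t x) * pdx (pdt \<psi>) t x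
         + (of_real (dxc \<psi> \<tau> t x) * pdx (pdt \<psi>) t x
            + of_real (dtxx \<tau> (t, x, \<psi> t x) (pdx \<psi> t x) (pdx (pdx \<psi>) t x)) * pdt \<psi> t x))
      - (of_real (\<xi> (t, x, \<psi> t x)) * pdx (pdx (pdx \<psi>)) t x + of_real (dxc \<psi> \<xi> t x) * pdx (pdx \<psi>) t x
         + (of_real (dxc \<psi> \<xi> t x) * pdx (pdx \<psi>) t x
            + of_real (dtxx \<xi> (t, x, \<psi> t x) (pdx \<psi> t x) (pdx (pdx \<psi>) t x)) * pdx \<psi> t x))"
    unfolding Qx using s ps by (simp add: sdx[OF s(4)] pdxdx[OF s(4)] dxv[OF s(4), of _ t x] dtx_def)
  have Qt: "pdt Qc t x = dtt \<eta> (t, x, \<psi> t x) (pdt \<psi> t x)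
      - (of_real (\<tau> (t, x, \<psi> t x)) * pdt (pdt \<psi>) t x + of_real (dtt \<tau> (t, x, \<psi> t x) (pdt \<psi> t x)) * pdt \<psi> t x)
      - (of_real (\<xi> (t, x, \<psi> t x)) * pdt (pdx \<psi>) t x + of_real (dtt \<xi> (t, x, \<psi> t x) (pdt \<psi> t x)) * pdx \<psi> t x)"
    using s ps by (simp add: Qc_def dtt_def)
  have "prolong_schr V (\<tau>, \<xi>, \<eta>) \<psi> t x =
     \<i> * (pdt Qc t x + of_real (\<tau> (t, x, \<psi> t x)) * pdt (pdt \<psi>) t x + of_real (\<xi> (t, x, \<psi> t x)) * pdx (pdt \<psi>) t x)
     + (pdx (pdx Qc) t x + of_real (\<tau> (t, x, \<psi> t x)) * pdt (pdx (pdx \<psi>)) t x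
        + of_real (\<xi> (t, x, \<psi> t x)) * pdx (pdx (pdx \<psi>)) t x)
     + of_real (\<tau> (t, x, \<psi> t x) * pdt V t x + \<xi> (t, x, \<psi> t x) * pdx V t x) * \<psi> t x
     + of_real (V t x) * \<eta> (t, x, \<psi> t x)"
    by (simp add: prolong_schr_def Let_def Qc_def)
  also have "\<dots> = PF V \<tau> \<xi> \<eta> t x (\<psi> t x) (pdt \<psi> t x) (pdx \<psi> t x) (pdx (pdx \<psi>) t x) (pdx (pdt \<psi>) t x)"
    unfolding Qt Qxx sw1 sw2 dxv[OF s(4)] PF_def by (simp add: algebra_simps)
  finally show ?thesis .
qed

lemma sym_smooth: "is_lie_symmetry V (\<tau>, \<xi>, \<eta>) \<Longrightarrow> smooth \<tau> \<and> smooth \<xi> \<and> smooth \<eta>"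
  by (simp add: is_lie_symmetry_def)

lemma crit_PF:
  assumes sym: "is_lie_symmetry V (\<tau>, \<xi>, \<eta>)"
  shows "PF V \<tau> \<xi> \<eta> t x z (\<i> * (B + of_real (V t x) * z)) a B w = 0"
proof -
  define e where "e = \<i> * (B + of_real (V t x) * z)"
  define \<psi> where "\<psi> = (\<lambda>s y. z + a * of_real (y - x) + B * of_real ((y - x) * (y - x)) / 2
       + e * of_real (s - t) + w * of_real ((s - t) * (y - x)))"
  have sm: "smooth \<tau>" "smooth \<xi>" "smooth \<eta>" using sym_smooth[OF sym] by auto
  have sp: "smooth2 \<psi>" unfolding \<psi>_def by simp
  have pt: "pdt \<psi> = (\<lambda>s y. e + w * of_real (y - x))"
    unfolding \<psi>_def by (rule ext)+ (simp add: field_simps)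
  have px: "pdx \<psi> = (\<lambda>s y. a + B * of_real (y - x) + w * of_real (s - t))"
    unfolding \<psi>_def by (rule ext)+ (simp add: field_simps)
  have j: "\<psi> t x = z" "pdt \<psi> t x = e" "pdx \<psi> t x = a" "pdx (pdx \<psi>) t x = B" "pdx (pdt \<psi>) t x = w"
    unfolding pt px by (simp_all add: \<psi>_def)
  have "schr V \<psi> t x = 0" unfolding schr_def j by (simp add: e_def algebra_simps)
  moreover have "smooth (\<lambda>(t, x). \<psi> t x)" using sp by (simp add: smooth2_iff)
  ultimately have "prolong_schr V (\<tau>, \<xi>, \<eta>) \<psi> t x = 0"
    using sym by (simp add: is_lie_symmetry_def)
  then show ?thesis using formula1[OF sm sp, of V t x] j by (simp add: e_def)
qed

lemma dd_const: "dd (\<lambda>q. c) v q = 0"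
  by (rule dd_eq[OF has_derivative_const, THEN trans]) simp

lemma D_const[simp]: "Dt (\<lambda>q. c) = (\<lambda>q. 0)" "Dx (\<lambda>q. c) = (\<lambda>q. 0)" "Dr (\<lambda>q. c) = (\<lambda>q. 0)" "Di (\<lambda>q. c) = (\<lambda>q. 0)"
  by (simp_all add: Dt_def Dx_def Dr_def Di_def dd_const fun_eq_iff)

lemma dd_zero_shift:
  assumes s: "smooth f" and z: "\<And>q. dd f v q = 0"
  shows "f (q + v) = f q"
proof -
  define g where "g = (\<lambda>s::real. f (q + s *\<^sub>R v))"
  have "(g has_derivative (\<lambda>h. 0)) (at s within UNIV)" for s
  proof -
    have "((\<lambda>s::real. q + s *\<^sub>R v) has_derivative (\<lambda>h. h *\<^sub>R v)) (at s)"
      by (auto intro!: derivative_eq_intros)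
    from smooth_chain[OF s this]
    have "(g has_derivative (\<lambda>h. dd f (h *\<^sub>R v) (q + s *\<^sub>R v))) (at s)" by (simp add: g_def)
    moreover have "(\<lambda>h. dd f (h *\<^sub>R v) (q + s *\<^sub>R v)) = (\<lambda>h. 0)"
      by (rule ext) (simp add: dd_scaleR[OF s] z)
    ultimately show ?thesis by simp
  qed
  then have "g 1 = g 0" by (intro has_derivative_zero_unique[of UNIV]) auto
  then show ?thesis by (simp add: g_def)
qed

lemma PF_w: "PF V \<tau> \<xi> \<eta> t x z e a B w = PF V \<tau> \<xi> \<eta> t x z e a B 0 - 2 * of_real (dtx \<tau> (t, x, z) a) * w"
  by (simp add: PF_def)

lemma stage1:
  assumes sym: "is_lie_symmetry V (\<tau>, \<xi>, \<eta>)"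
  shows "\<tau> = (\<lambda>q. \<tau> (fst q, 0, 0))"
proof -
  have sm: "smooth \<tau>" using sym_smooth[OF sym] by auto
  have dtx0: "dtx \<tau> q a = 0" for q a
  proof -
    obtain t x z where q: "q = (t, x, z)" by (cases q) auto
    have "PF V \<tau> \<xi> \<eta> t x z (\<i> * (0 + of_real (V t x) * z)) a 0 1 = 0"
         "PF V \<tau> \<xi> \<eta> t x z (\<i> * (0 + of_real (V t x) * z)) a 0 0 = 0"
      using crit_PF[OF sym] by blast+
    then show ?thesis using PF_w[of V \<tau> \<xi> \<eta> t x z _ a 0 1] q by simp
  qed
  have "Dx \<tau> q = 0" "Dr \<tau> q = 0" "Di \<tau> q = 0" for q
    using dtx0[of q 0] dtx0[of q 1] dtx0[of q \<i>] by (simp_all add: dtx_def)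
  then have z: "dd \<tau> (0, x, z) q = 0" for x z q by (simp add: dd_split[OF sm])
  show ?thesis
  proof
    fix q :: "real \<times> real \<times> complex"
    obtain t x z where q: "q = (t, x, z)" by (cases q) auto
    have "\<tau> ((t, 0, 0) + (0, x, z)) = \<tau> (t, 0, 0)" by (rule dd_zero_shift[OF sm z])
    then show "\<tau> q = \<tau> (fst q, 0, 0)" by (simp add: q)
  qed
qed

lemma lift1_dd: "smooth \<tau>0 \<Longrightarrow> dd (\<lambda>q::real \<times> real \<times> complex. \<tau>0 (fst q)) v q = fst v * deriv \<tau>0 (fst q)"
  by (rule dd_eq, rule smooth1_chain, assumption,
      rule bounded_linear.has_derivative[OF bounded_linear_fst has_derivative_ident])

lemma D_lift1[simp]:
  assumes "smooth (\<tau>0 :: real \<Rightarrow> real)"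
  shows "Dt (\<lambda>q::real \<times> real \<times> complex. \<tau>0 (fst q)) = (\<lambda>q. deriv \<tau>0 (fst q))"
    "Dx (\<lambda>q::real \<times> real \<times> complex. \<tau>0 (fst q)) = (\<lambda>q. 0)"
    "Dr (\<lambda>q::real \<times> real \<times> complex. \<tau>0 (fst q)) = (\<lambda>q. 0)"
    "Di (\<lambda>q::real \<times> real \<times> complex. \<tau>0 (fst q)) = (\<lambda>q. 0)"
  by (simp_all add: Dt_def Dx_def Dr_def Di_def lift1_dd[OF assms] fun_eq_iff)

lemma smooth_tau0: "smooth (\<tau> :: real \<times> real \<times> complex \<Rightarrow> real) \<Longrightarrow> smooth (\<lambda>t. \<tau> (t, 0, 0))"
  by (rule smooth_compose, assumption) (intro smooth_Pair smooth_id smooth_const)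

lemma stage2:
  assumes sym: "is_lie_symmetry V (\<lambda>q. \<tau>0 (fst q), \<xi>, \<eta>)" and st: "smooth \<tau>0"
  shows "Dx \<xi> (t, x, z) = deriv \<tau>0 t / 2 \<and> Di \<eta> (t, x, z) = \<i> * Dr \<eta> (t, x, z)"
proof -
  have h: "PF V (\<lambda>q. \<tau>0 (fst q)) \<xi> \<eta> t x z (\<i> * (B + of_real (V t x) * z)) 0 B 0 = 0" for B
    using crit_PF[OF sym] by blast
  note e0 = h[of 0] and e1 = h[of 1] and ei = h[of \<i>]
  have "Re (Di \<eta> (t, x, z)) = - Im (Dr \<eta> (t, x, z)) \<and> Im (Di \<eta> (t, x, z)) = Re (Dr \<eta> (t, x, z))
     \<and> Dx \<xi> (t, x, z) = deriv \<tau>0 t / 2"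
    using e0 e1 ei
    by (simp add: PF_def dtt_def dtx_def dtxx_def st complex_eq_iff algebra_simps)
  then show ?thesis by (simp add: complex_eq_iff)
qed

lemma stage3:
  assumes sym: "is_lie_symmetry V (\<lambda>q. \<tau>0 (fst q), \<xi>, \<eta>)" and st: "smooth \<tau>0"
  shows "Dr \<xi> (t, x, z) = 0 \<and> Di \<xi> (t, x, z) = 0"
proof -
  have h: "PF V (\<lambda>q. \<tau>0 (fst q)) \<xi> \<eta> t x z (\<i> * (B + of_real (V t x) * z)) a B 0 = 0" for a B
    using crit_PF[OF sym] by blast
  note e00 = h[of 0 0] and e10 = h[of 1 0] and e01 = h[of 0 1] and e11 = h[of 1 1]
  show ?thesis
    using e00 e10 e01 e11
    by (simp add: PF_def dtt_def dtx_def dtxx_def st complex_eq_iff algebra_simps)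
qed

lemma lift2_dd: "smooth2 g \<Longrightarrow> dd (\<lambda>q::real \<times> real \<times> complex. g (fst q) (fst (snd q))) v q
    = fst v *\<^sub>R pdt g (fst q) (fst (snd q)) + fst (snd v) *\<^sub>R pdx g (fst q) (fst (snd q))"
  by (rule dd_eq, rule smooth2_chain, assumption,
      rule bounded_linear.has_derivative[OF bounded_linear_fst has_derivative_ident],
      rule bounded_linear.has_derivative[OF bounded_linear_fst bounded_linear.has_derivative[OF bounded_linear_snd has_derivative_ident]])

lemma D_lift2[simp]:
  assumes "smooth2 g"
  shows "Dt (\<lambda>q::real \<times> real \<times> complex. g (fst q) (fst (snd q))) = (\<lambda>q. pdt g (fst q) (fst (snd q)))"
    "Dx (\<lambda>q::real \<times> real \<times> complex. g (fst q) (fst (snd q))) = (\<lambda>q. pdx g (fst q) (fst (snd q)))"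
    "Dr (\<lambda>q::real \<times> real \<times> complex. g (fst q) (fst (snd q))) = (\<lambda>q. 0)"
    "Di (\<lambda>q::real \<times> real \<times> complex. g (fst q) (fst (snd q))) = (\<lambda>q. 0)"
  by (simp_all add: Dt_def Dx_def Dr_def Di_def lift2_dd[OF assms] fun_eq_iff)

lemma D_lift2'[simp]:
  assumes "smooth2 g"
  shows "Dt (\<lambda>q::real \<times> real \<times> complex. pdx g (fst q) (fst (snd q))) = (\<lambda>q. pdt (pdx g) (fst q) (fst (snd q)))"
    "Dx (\<lambda>q::real \<times> real \<times> complex. pdx g (fst q) (fst (snd q))) = (\<lambda>q. pdx (pdx g) (fst q) (fst (snd q)))"
    "Dr (\<lambda>q::real \<times> real \<times> complex. pdx g (fst q) (fst (snd q))) = (\<lambda>q. 0)"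
    "Di (\<lambda>q::real \<times> real \<times> complex. pdx g (fst q) (fst (snd q))) = (\<lambda>q. 0)"
  using D_lift2[OF smooth2_pdx[OF assms]] by simp_all

lemma smooth2_xi0: "smooth (\<xi> :: real \<times> real \<times> complex \<Rightarrow> 'a::real_normed_vector) \<Longrightarrow> smooth2 (\<lambda>t x. \<xi> (t, x, 0))"
  unfolding smooth2_def
  by (rule smooth_compose, assumption) (intro smooth_Pair smooth_fst smooth_snd smooth_id smooth_const)

lemma stage3':
  assumes sym: "is_lie_symmetry V (\<lambda>q. \<tau>0 (fst q), \<xi>, \<eta>)" and st: "smooth \<tau>0"
  shows "\<xi> = (\<lambda>q. \<xi> (fst q, fst (snd q), 0))"
proof
  fix q :: "real \<times> real \<times> complex"
  obtain t x z where q: "q = (t, x, z)" by (cases q) auto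
  have sm: "smooth \<xi>" using sym_smooth[OF sym] by auto
  have "dd \<xi> (0, 0, z) q' = 0" for q'
  proof -
    obtain t' x' z' where "q' = (t', x', z')" by (cases q') auto
    then show ?thesis using stage3[OF sym st, of t' x' z'] by (simp add: dd_split[OF sm])
  qed
  then have "\<xi> ((t, x, 0) + (0, 0, z)) = \<xi> (t, x, 0)" by (rule dd_zero_shift[OF sm])
  then show "\<xi> q = \<xi> (fst q, fst (snd q), 0)" by (simp add: q)
qed

lemma dd_cmult: "smooth f \<Longrightarrow> dd (\<lambda>q. c * (f q :: complex)) v q = c * dd f v q"
  by (rule dd_eq, rule has_derivative_mult[OF has_derivative_const smooth_hasderiv, THEN has_derivative_eq_rhs])
     (auto simp: fun_eq_iff)

lemma stage4:
  assumes sym: "is_lie_symmetry V (\<lambda>q. \<tau>0 (fst q), \<lambda>q. \<xi>0 (fst q) (fst (snd q)), \<eta>)"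
    and st: "smooth \<tau>0" and sx: "smooth2 \<xi>0"
  shows "Dr (Dr \<eta>) (t, x, z) = 0 \<and> Di (Di \<eta>) (t, x, z) = 0"
proof -
  have h: "PF V (\<lambda>q. \<tau>0 (fst q)) (\<lambda>q. \<xi>0 (fst q) (fst (snd q))) \<eta> t x z (\<i> * (0 + of_real (V t x) * z)) a 0 0 = 0" for a
    using crit_PF[OF sym] by blast
  note e0 = h[of 0] and e1 = h[of 1] and e2 = h[of "-1"] and e3 = h[of \<i>] and e4 = h[of "-\<i>"]
  show ?thesis
    using e0 e1 e2 e3 e4
    by (simp add: PF_def dtt_def dtx_def dtxx_def st sx complex_eq_iff algebra_simps)
qed

lemma eta_affine:
  fixes \<eta> :: "real \<times> real \<times> complex \<Rightarrow> complex"
  assumes sm: "smooth \<eta>" and hDi: "\<And>q. Di \<eta> q = \<i> * Dr \<eta> q"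
    and hrr: "\<And>q. Dr (Dr \<eta>) q = 0" and hii: "\<And>q. Di (Di \<eta>) q = 0"
  shows "\<eta> = (\<lambda>q. \<eta> (fst q, fst (snd q), 0) + Dr \<eta> (fst q, fst (snd q), 0) * snd (snd q))"
proof -
  have sr: "smooth (Dr \<eta>)" using sm by simp
  have fe: "Di \<eta> = (\<lambda>q. \<i> * Dr \<eta> q)" using hDi by (simp add: fun_eq_iff)
  have ri: "Di (Dr \<eta>) q = 0" for q
  proof -
    have "Di (Di \<eta>) q = Di (\<lambda>q. \<i> * Dr \<eta> q) q" by (simp only: fe)
    also have "\<dots> = \<i> * Di (Dr \<eta>) q" unfolding Di_def by (rule dd_cmult[OF sr])
    finally have "Di (Di \<eta>) q = \<i> * Di (Dr \<eta>) q" .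
    then show ?thesis using hii by simp
  qed
  have rinv: "Dr \<eta> (t, x, z) = Dr \<eta> (t, x, 0)" for t x z
  proof -
    have "dd (Dr \<eta>) (0, 0, z) q = 0" for q by (simp add: dd_split[OF sr] hrr ri)
    then have "Dr \<eta> ((t, x, 0) + (0, 0, z)) = Dr \<eta> (t, x, 0)" by (rule dd_zero_shift[OF sr])
    then show ?thesis by simp
  qed
  define F where "F = (\<lambda>t x. Dr \<eta> (t, x, 0))"
  have sF: "smooth2 F" unfolding F_def by (rule smooth2_xi0[OF sr])
  define k where "k = (\<lambda>q. \<eta> q - snd (snd q) * F (fst q) (fst (snd q)))"
  have sk: "smooth k" unfolding k_def
    by (intro smooth_diff sm smooth_mult smooth_snd smooth_id smooth2_lift[OF sF])
  have dk: "dd k (0, 0, z) q = 0" for z q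
  proof -
    obtain t x w where q: "q = (t, x, w)" by (cases q) auto
    have "(k has_derivative (\<lambda>v. dd \<eta> v q - (snd (snd q) * (fst v *\<^sub>R pdt F (fst q) (fst (snd q))
        + fst (snd v) *\<^sub>R pdx F (fst q) (fst (snd q))) + snd (snd v) * F (fst q) (fst (snd q))))) (at q)"
      unfolding k_def
      by (intro has_derivative_diff smooth_hasderiv[OF sm] has_derivative_mult smooth2_chain[OF sF]
          bounded_linear.has_derivative[OF bounded_linear_fst has_derivative_ident]
          bounded_linear.has_derivative[OF bounded_linear_snd has_derivative_ident]
          bounded_linear.has_derivative[OF bounded_linear_fst bounded_linear.has_derivative[OF bounded_linear_snd has_derivative_ident]]
          bounded_linear.has_derivative[OF bounded_linear_snd bounded_linear.has_derivative[OF bounded_linear_snd has_derivative_ident]])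
    then have "dd k (0, 0, z) q = dd \<eta> (0, 0, z) q - z * F t x" by (simp add: dd_eq q)
    also have "dd \<eta> (0, 0, z) q = z * F t x"
      by (simp add: dd_split[OF sm] q hDi F_def rinv[of t x w] complex_eq_iff algebra_simps)
    finally show ?thesis by simp
  qed
  show ?thesis
  proof
    fix q :: "real \<times> real \<times> complex"
    obtain t x z where q: "q = (t, x, z)" by (cases q) auto
    have "k ((t, x, 0) + (0, 0, z)) = k (t, x, 0)" by (rule dd_zero_shift[OF sk dk])
    then show "\<eta> q = \<eta> (fst q, fst (snd q), 0) + Dr \<eta> (fst q, fst (snd q), 0) * snd (snd q)"
      by (simp add: k_def q F_def algebra_simps eq_diff_eq)
  qed
qed

lemma struct_thm:
  assumes sym: "is_lie_symmetry V (\<tau>, \<xi>, \<eta>)"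
  defines "\<tau>0 \<equiv> (\<lambda>t. \<tau> (t, 0, 0))" and "\<xi>0 \<equiv> (\<lambda>t x. \<xi> (t, x, 0))"
    and "H0 \<equiv> (\<lambda>t x. \<eta> (t, x, 0))" and "F \<equiv> (\<lambda>t x. Dr \<eta> (t, x, 0))"
  shows "(\<tau>, \<xi>, \<eta>) = redQ \<tau>0 \<xi>0 H0 F" "smooth \<tau>0" "smooth2 \<xi>0" "smooth2 H0" "smooth2 F"
proof -
  have sm: "smooth \<tau>" "smooth \<xi>" "smooth \<eta>" using sym_smooth[OF sym] by auto
  show st: "smooth \<tau>0" unfolding \<tau>0_def by (rule smooth_tau0[OF sm(1)])
  show sx: "smooth2 \<xi>0" unfolding \<xi>0_def by (rule smooth2_xi0[OF sm(2)])
  show "smooth2 H0" unfolding H0_def by (rule smooth2_xi0[OF sm(3)])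
  show "smooth2 F" unfolding F_def by (rule smooth2_xi0) (simp add: sm(3))
  have t1: "\<tau> = (\<lambda>q. \<tau>0 (fst q))" unfolding \<tau>0_def by (rule stage1[OF sym])
  have sym1: "is_lie_symmetry V (\<lambda>q. \<tau>0 (fst q), \<xi>, \<eta>)" using sym t1 by simp
  have hDi: "Di \<eta> q = \<i> * Dr \<eta> q" for q
    using stage2[OF sym1 st, of "fst q" "fst (snd q)" "snd (snd q)"] by simp
  have x1: "\<xi> = (\<lambda>q. \<xi>0 (fst q) (fst (snd q)))" unfolding \<xi>0_def by (rule stage3'[OF sym1 st])
  have sym2: "is_lie_symmetry V (\<lambda>q. \<tau>0 (fst q), \<lambda>q. \<xi>0 (fst q) (fst (snd q)), \<eta>)" using sym1 x1 by simp
  have hrr: "Dr (Dr \<eta>) q = 0" and hii: "Di (Di \<eta>) q = 0" for q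
    using stage4[OF sym2 st sx, of "fst q" "fst (snd q)" "snd (snd q)"] by simp_all
  have e1: "\<eta> = (\<lambda>q. H0 (fst q) (fst (snd q)) + F (fst q) (fst (snd q)) * snd (snd q))"
    unfolding H0_def F_def by (rule eta_affine[OF sm(3) hDi hrr hii])
  show "(\<tau>, \<xi>, \<eta>) = redQ \<tau>0 \<xi>0 H0 F"
    unfolding redQ_def using t1 x1 e1 by simp
qed

lemma testpoly:
  "\<exists>\<psi>::real \<Rightarrow> real \<Rightarrow> complex. smooth2 \<psi> \<and> \<psi> t x = z \<and> pdt \<psi> t x = e \<and> pdx \<psi> t x = a
      \<and> pdx (pdx \<psi>) t x = B \<and> pdx (pdt \<psi>) t x = w"
proof -
  define \<psi> where "\<psi> = (\<lambda>s y. z + a * of_real (y - x) + B * of_real ((y - x) * (y - x)) / 2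
       + e * of_real (s - t) + w * of_real ((s - t) * (y - x)))"
  have sp: "smooth2 \<psi>" unfolding \<psi>_def by simp
  have pt: "pdt \<psi> = (\<lambda>s y. e + w * of_real (y - x))"
    unfolding \<psi>_def by (rule ext)+ (simp add: field_simps)
  have px: "pdx \<psi> = (\<lambda>s y. a + B * of_real (y - x) + w * of_real (s - t))"
    unfolding \<psi>_def by (rule ext)+ (simp add: field_simps)
  have j: "\<psi> t x = z" "pdt \<psi> t x = e" "pdx \<psi> t x = a" "pdx (pdx \<psi>) t x = B" "pdx (pdt \<psi>) t x = w"
    unfolding pt px by (simp_all add: \<psi>_def)
  then show ?thesis using sp by blast
qed

lemma crit2:
  assumes sym: "is_lie_symmetry V (redQ \<tau>0 \<xi>0 H0 F)"
    and s: "smooth \<tau>0" "smooth2 \<xi>0" "smooth2 H0" "smooth2 F"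
  shows "\<i> * (pdt H0 t x + pdt F t x * z + F t x * (\<i> * (B + of_real (V t x) * z)) - of_real (deriv \<tau>0 t) * (\<i> * (B + of_real (V t x) * z))
          - of_real (pdt \<xi>0 t x) * a)
    + (pdx (pdx H0) t x + pdx (pdx F) t x * z + 2 * pdx F t x * a + F t x * B
       - 2 * of_real (pdx \<xi>0 t x) * B - of_real (pdx (pdx \<xi>0) t x) * a)
    + of_real (\<tau>0 t * pdt V t x + \<xi>0 t x * pdx V t x) * z + of_real (V t x) * (H0 t x + F t x * z) = 0"
proof -
  obtain \<psi> :: "real \<Rightarrow> real \<Rightarrow> complex" where p: "smooth2 \<psi>" "\<psi> t x = z" "pdt \<psi> t x = \<i> * (B + of_real (V t x) * z)" "pdx \<psi> t x = a"
      "pdx (pdx \<psi>) t x = B"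
    using testpoly by blast
  have "schr V \<psi> t x = 0" unfolding schr_def using p by (simp add: algebra_simps)
  moreover have "smooth (\<lambda>(t, x). \<psi> t x)" using p by (simp add: smooth2_iff)
  ultimately have "prolong_schr V (redQ \<tau>0 \<xi>0 H0 F) \<psi> t x = 0"
    using sym by (auto simp: is_lie_symmetry_def split: prod.splits)
  then show ?thesis unfolding formula2[OF s p(1)] using p by simp
qed

lemma const1:
  fixes g :: "real \<Rightarrow> 'a::real_normed_vector"
  assumes "\<And>y. (g has_vector_derivative 0) (at y)"
  shows "g a = g b"
  by (rule has_derivative_zero_unique[of UNIV g]) (use assms in \<open>auto simp: has_vector_derivative_def\<close>)

lemma smooth2_slice: "smooth2 g \<Longrightarrow> smooth (\<lambda>t. g t c)"
  unfolding smooth2_def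
  using smooth_compose[of "\<lambda>p. g (fst p) (snd p)" "\<lambda>t::real. (t, c)"]
  by (simp add: smooth_Pair)

lemma sub_dir:
  fixes V :: "real \<Rightarrow> real \<Rightarrow> real"
  assumes sym: "is_lie_symmetry V Q"
  shows "\<exists>\<tau> chi \<sigma> c \<eta>0. Q = vf_add (vfD \<tau>) (vf_add (vfG chi) (vf_add (vf_scale c vfI) (vf_add (vfM \<sigma>) (vfZ \<eta>0))))
      \<and> smooth \<tau> \<and> smooth chi \<and> smooth \<sigma> \<and> det_eq V \<tau> chi \<sigma> \<and> is_solution V \<eta>0"
proof -
  obtain \<tau> \<xi> \<eta> where Q: "Q = (\<tau>, \<xi>, \<eta>)" by (cases Q) auto
  define \<tau>0 where "\<tau>0 = (\<lambda>t. \<tau> (t, 0, 0))"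
  define \<xi>0 where "\<xi>0 = (\<lambda>t x. \<xi> (t, x, 0))"
  define H0 where "H0 = (\<lambda>t x. \<eta> (t, x, 0))"
  define F where "F = (\<lambda>t x. Dr \<eta> (t, x, 0))"
  have sym': "is_lie_symmetry V (\<tau>, \<xi>, \<eta>)" using sym Q by simp
  note S = struct_thm[OF sym', folded \<tau>0_def \<xi>0_def H0_def F_def]
  have Qr: "Q = redQ \<tau>0 \<xi>0 H0 F" using S(1) Q by simp
  have st: "smooth \<tau>0" and sx: "smooth2 \<xi>0" and sH: "smooth2 H0" and sF: "smooth2 F" using S by auto
  have symr: "is_lie_symmetry V (redQ \<tau>0 \<xi>0 H0 F)" using sym Qr by simp
  note C = crit2[OF symr st sx sH sF]
  have E4: "\<i> * pdt H0 t x + pdx (pdx H0) t x + of_real (V t x) * H0 t x = 0" for t x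
    using C[of t x 0 0 0] by simp
  have E4': "pdx (pdx H0) t x = - (\<i> * pdt H0 t x) - of_real (V t x) * H0 t x" for t x
    using E4[of t x] by (simp add: algebra_simps eq_neg_iff_add_eq_0)
  have E1: "pdx \<xi>0 t x = deriv \<tau>0 t / 2" for t x
  proof -
    have "\<i> * (F t x * (\<i> * 1) - of_real (deriv \<tau>0 t) * (\<i> * 1)) + (F t x * 1 - 2 * of_real (pdx \<xi>0 t x) * 1) = 0"
      using C[of t x 0 1 0] by (simp add: E4' algebra_simps)
    then have "deriv \<tau>0 t = 2 * pdx \<xi>0 t x" by (simp add: complex_eq_iff algebra_simps)
    then show ?thesis by simp
  qed
  have E2: "- \<i> * of_real (pdt \<xi>0 t x) + 2 * pdx F t x - of_real (pdx (pdx \<xi>0) t x) = 0" for t x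
    using C[of t x 0 0 1] by (simp add: E4' algebra_simps)
  have E3: "\<i> * pdt F t x + pdx (pdx F) t x
      + of_real (deriv \<tau>0 t * V t x + \<tau>0 t * pdt V t x + \<xi>0 t x * pdx V t x) = 0" for t x
    using C[of t x 1 0 0] by (simp add: E4' algebra_simps)
  define chi where "chi = (\<lambda>t. \<xi>0 t 0)"
  have sc: "smooth chi" unfolding chi_def by (rule smooth2_slice[OF sx])
  have s1: "smooth (deriv \<tau>0)" "smooth (deriv (deriv \<tau>0))" "smooth (deriv (deriv (deriv \<tau>0)))"
    "smooth (deriv chi)" "smooth (deriv (deriv chi))"
    using smooth1_deriv st sc by blast+
  have xi_eq: "\<xi>0 = (\<lambda>t x. deriv \<tau>0 t / 2 * x + chi t)"
  proof (intro ext)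
    fix t x
    define g where "g = (\<lambda>s y. \<xi>0 s y - deriv \<tau>0 s / 2 * y)"
    have sg: "smooth2 g" unfolding g_def using sx s1 by simp
    have "pdx g t y = 0" for y unfolding g_def using sx s1 by (simp add: E1)
    then have "g t x = g t 0" using hvd_x[OF sg] by (intro const1) metis
    then show "\<xi>0 t x = deriv \<tau>0 t / 2 * x + chi t" by (simp add: g_def chi_def)
  qed
  have dxi: "pdt \<xi>0 t x = deriv (deriv \<tau>0) t / 2 * x + deriv chi t" "pdx (pdx \<xi>0) t x = 0" for t x
  proof -
    show "pdt \<xi>0 t x = deriv (deriv \<tau>0) t / 2 * x + deriv chi t" unfolding xi_eq using s1 sc by simp
    have "pdx \<xi>0 = (\<lambda>t x. deriv \<tau>0 t / 2)" unfolding xi_eq using s1 sc by (auto simp: fun_eq_iff)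
    then show "pdx (pdx \<xi>0) t x = 0" by simp
  qed
  define \<rho> where "\<rho> = (\<lambda>t. Re (F t 0))"
  define \<sigma> where "\<sigma> = (\<lambda>t. Im (F t 0))"
  have sr: "smooth \<rho>" "smooth \<sigma>" unfolding \<rho>_def \<sigma>_def using smooth2_slice[OF sF] by (auto intro: smooth_Re smooth_Im)
  have F_eq: "F = (\<lambda>t x. complex_of_real (\<rho> t)
      + \<i> * complex_of_real (\<sigma> t + deriv (deriv \<tau>0) t * (x * x) / 8 + deriv chi t * x / 2))"
  proof (intro ext)
    fix t x
    define g where "g = (\<lambda>s y. F s y - \<i> * complex_of_real (deriv (deriv \<tau>0) s * (y * y) / 8 + deriv chi s * y / 2))"
    have sg: "smooth2 g" unfolding g_def using sF s1 by simp
    have "pdx g t y = 0" for y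
    proof -
      have "2 * pdx F t y = \<i> * of_real (pdt \<xi>0 t y) + of_real (pdx (pdx \<xi>0) t y)"
        using E2[of t y] by (simp add: algebra_simps)
      then have "pdx F t y = \<i> * of_real (deriv (deriv \<tau>0) t / 4 * y + deriv chi t / 2)"
        unfolding dxi by (simp add: complex_eq_iff)
      then show ?thesis unfolding g_def using sF s1 by (simp add: complex_eq_iff field_simps)
    qed
    then have "g t x = g t 0" using hvd_x[OF sg] by (intro const1) metis
    then show "F t x = complex_of_real (\<rho> t)
      + \<i> * complex_of_real (\<sigma> t + deriv (deriv \<tau>0) t * (x * x) / 8 + deriv chi t * x / 2)"
      by (simp add: g_def \<rho>_def \<sigma>_def complex_eq_iff)
  qed
  have s2: "smooth (deriv \<rho>)" "smooth (deriv \<sigma>)" using smooth1_deriv sr by blast+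
  have dF: "pdt F t x = complex_of_real (deriv \<rho> t)
      + \<i> * complex_of_real (deriv \<sigma> t + deriv (deriv (deriv \<tau>0)) t * (x * x) / 8 + deriv (deriv chi) t * x / 2)"
    "pdx (pdx F) t x = \<i> * complex_of_real (deriv (deriv \<tau>0) t / 4)" for t x
  proof -
    show "pdt F t x = complex_of_real (deriv \<rho> t)
      + \<i> * complex_of_real (deriv \<sigma> t + deriv (deriv (deriv \<tau>0)) t * (x * x) / 8 + deriv (deriv chi) t * x / 2)"
      unfolding F_eq using s1 sr by simp
    have "pdx F = (\<lambda>t x. \<i> * complex_of_real (deriv (deriv \<tau>0) t * x / 4 + deriv chi t / 2))"
      unfolding F_eq using s1 sr by (auto simp: fun_eq_iff field_simps)
    then show "pdx (pdx F) t x = \<i> * complex_of_real (deriv (deriv \<tau>0) t / 4)" using s1 by simp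
  qed
  define c where "c = \<rho> 0 + deriv \<tau>0 0 / 4"
  have rho_eq: "\<rho> t = c - deriv \<tau>0 t / 4" for t
  proof -
    define g where "g = (\<lambda>s y::real. \<rho> s + deriv \<tau>0 s / 4)"
    have sg: "smooth2 g" unfolding g_def using sr s1 by simp
    have pg: "pdt g s 0 = 0" for s
    proof -
      have "Re (pdt F s 0) + Im (pdx (pdx F) s 0) = 0"
        using arg_cong[OF E3[of s 0], of Im] by simp
      then have "deriv \<rho> s + deriv (deriv \<tau>0) s / 4 = 0" unfolding dF by simp
      then show ?thesis unfolding g_def using sr s1 by simp
    qed
    have "((\<lambda>s. g s 0) has_vector_derivative 0) (at y)" for y
      using hvd_t[OF sg, where s=y and u=0 and S=UNIV] pg[of y] by simp
    then have "g t 0 = g 0 0" by (rule const1)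
    then show ?thesis by (simp add: g_def c_def)
  qed
  have det: "det_eq V \<tau>0 chi \<sigma>"
    unfolding det_eq_def
  proof (intro allI)
    fix t x
    have "Re (\<i> * pdt F t x + pdx (pdx F) t x
      + of_real (deriv \<tau>0 t * V t x + \<tau>0 t * pdt V t x + \<xi>0 t x * pdx V t x)) = 0"
      using E3[of t x] by simp
    then have "deriv \<tau>0 t * V t x + \<tau>0 t * pdt V t x + \<xi>0 t x * pdx V t x
      = deriv \<sigma> t + deriv (deriv (deriv \<tau>0)) t * (x * x) / 8 + deriv (deriv chi) t * x / 2"
      unfolding dF by simp
    then show "\<tau>0 t * pdt V t x + (1/2 * deriv \<tau>0 t * x + chi t) * pdx V t x + deriv \<tau>0 t * V t x
       = 1/8 * (deriv ^^ 3) \<tau>0 t * x\<^sup>2 + 1/2 * (deriv ^^ 2) chi t * x + deriv \<sigma> t"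
      unfolding xi_eq by (simp add: numeral_3_eq_3 numeral_2_eq_2 power2_eq_square algebra_simps)
  qed
  have sol: "is_solution V H0"
    unfolding is_solution_def schr_def using E4 sH by (simp add: smooth2_iff)
  have d2: "(deriv ^^ 2) \<tau>0 = deriv (deriv \<tau>0)" by (simp add: numeral_2_eq_2)
  have "vf_add (vfD \<tau>0) (vf_add (vfG chi) (vf_add (vf_scale c vfI) (vf_add (vfM \<sigma>) (vfZ H0))))
     = (\<lambda>q. \<tau>0 (fst q), \<lambda>q. deriv \<tau>0 (fst q) / 2 * fst (snd q) + chi (fst q),
        \<lambda>q. of_real (1/8 * deriv (deriv \<tau>0) (fst q) * (fst (snd q))\<^sup>2) * \<i> * snd (snd q)
           - of_real (1/4 * deriv \<tau>0 (fst q)) * snd (snd q)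
           + (of_real (1/2 * deriv chi (fst q) * fst (snd q)) * \<i> * snd (snd q)
           + (of_real c * snd (snd q) + (of_real (\<sigma> (fst q)) * \<i> * snd (snd q) + H0 (fst q) (fst (snd q))))))"
    unfolding vf_add_def vfD_def vfG_def vf_scale_def vfI_def vfM_def vfZ_def d2
    by (simp add: case_prod_beta')
  also have "\<dots> = redQ \<tau>0 \<xi>0 H0 F"
  proof -
    have c2: "(\<lambda>q::real \<times> real \<times> complex. deriv \<tau>0 (fst q) / 2 * fst (snd q) + chi (fst q))
        = (\<lambda>q. \<xi>0 (fst q) (fst (snd q)))" by (simp add: xi_eq)
    have c3: "(\<lambda>q::real \<times> real \<times> complex. of_real (1/8 * deriv (deriv \<tau>0) (fst q) * (fst (snd q))\<^sup>2) * \<i> * snd (snd q)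
           - of_real (1/4 * deriv \<tau>0 (fst q)) * snd (snd q)
           + (of_real (1/2 * deriv chi (fst q) * fst (snd q)) * \<i> * snd (snd q)
           + (of_real c * snd (snd q) + (of_real (\<sigma> (fst q)) * \<i> * snd (snd q) + H0 (fst q) (fst (snd q))))))
       = (\<lambda>q. H0 (fst q) (fst (snd q)) + F (fst q) (fst (snd q)) * snd (snd q))"
      by (rule ext) (simp add: F_eq rho_eq power2_eq_square algebra_simps)
    show ?thesis unfolding redQ_def c2 c3 ..
  qed
  finally have "Q = vf_add (vfD \<tau>0) (vf_add (vfG chi) (vf_add (vf_scale c vfI) (vf_add (vfM \<sigma>) (vfZ H0))))"
    using Qr by simp
  then show ?thesis using st sc sr det sol by blast
qed

theorem theorem10:
  fixes V :: "real \<Rightarrow> real \<Rightarrow> real"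
  assumes "smooth (\<lambda>(t, x). V t x)"
  shows "lie_algebra V =
    {vf_add (vfD \<tau>) (vf_add (vfG chi) (vf_add (vf_scale c vfI) (vf_add (vfM \<sigma>) (vfZ \<eta>0))))
      | \<tau> chi \<sigma> c \<eta>0. smooth \<tau> \<and> smooth chi \<and> smooth \<sigma> \<and> det_eq V \<tau> chi \<sigma> \<and> is_solution V \<eta>0}"
proof (intro set_eqI iffI)
  fix Q
  assume "Q \<in> lie_algebra V"
  then have "is_lie_symmetry V Q" by (simp add: lie_algebra_def)
  from sub_dir[OF this] show "Q \<in> {vf_add (vfD \<tau>) (vf_add (vfG chi) (vf_add (vf_scale c vfI) (vf_add (vfM \<sigma>) (vfZ \<eta>0))))
      | \<tau> chi \<sigma> c \<eta>0. smooth \<tau> \<and> smooth chi \<and> smooth \<sigma> \<and> det_eq V \<tau> chi \<sigma> \<and> is_solution V \<eta>0}"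
    by blast
next
  fix Q
  assume "Q \<in> {vf_add (vfD \<tau>) (vf_add (vfG chi) (vf_add (vf_scale c vfI) (vf_add (vfM \<sigma>) (vfZ \<eta>0))))
      | \<tau> chi \<sigma> c \<eta>0. smooth \<tau> \<and> smooth chi \<and> smooth \<sigma> \<and> det_eq V \<tau> chi \<sigma> \<and> is_solution V \<eta>0}"
  then obtain \<tau> chi \<sigma> c \<eta>0 where
    Q: "Q = vf_add (vfD \<tau>) (vf_add (vfG chi) (vf_add (vf_scale c vfI) (vf_add (vfM \<sigma>) (vfZ \<eta>0))))"
    and h: "smooth \<tau>" "smooth chi" "smooth \<sigma>" "det_eq V \<tau> chi \<sigma>" "is_solution V \<eta>0"
    by blast
  show "Q \<in> lie_algebra V"
    unfolding lie_algebra_def Q using sup_dir[OF h] by simp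
qed

end
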